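(* Let $n\ge2$, $A\in\mathbb{R}^{n\times n}$ symmetric with eigenvalues $\lambda_1\ge\dots\ge\lambda_n$, $\rho=\lambda_1-\lambda_n$, $\delta:=\lambda_{n-1}-\lambda_n>0$, $\gamma>0$ and $0<\beta\le\big[2(\frac73+\gamma)+(\frac23+\gamma)\frac{\rho}{\delta}\big]^{-1}\delta$. Then $f(\mathbf{z})=\frac12\mathbf{z}^TA\mathbf{z}+\frac{\beta}{2}\sum_kz_k^4$ has exactly two local minimizers on $\mathbb{S}^{n-1}$, and both are global minimizers.
   Context: $\mathbb{S}^{n-1}$ is the unit sphere in $\mathbb{R}^n$. *)

theory Defs
  imports Complex_Main "Jordan_Normal_Form.Char_Poly"
begin

definition unit_sphere :: "nat \<Rightarrow> real vec set" where
  "unit_sphere n = {z. z \<in> carrier_vec n \<and> z \<bullet> z = 1}"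

definition vdist :: "real vec \<Rightarrow> real vec \<Rightarrow> real" where
  "vdist z w = sqrt ((z - w) \<bullet> (z - w))"

definition obj :: "real mat \<Rightarrow> real \<Rightarrow> real vec \<Rightarrow> real" where
  "obj A \<beta> z = (1/2) * (z \<bullet> (A *\<^sub>v z)) + (\<beta>/2) * (\<Sum>k<dim_vec z. (z $ k) ^ 4)"

definition local_minimizer_on :: "(real vec \<Rightarrow> real) \<Rightarrow> real vec set \<Rightarrow> real vec \<Rightarrow> bool" where
  "local_minimizer_on f S z \<longleftrightarrow> z \<in> S \<and>
     (\<exists>\<epsilon>>0. \<forall>w\<in>S. vdist w z < \<epsilon> \<longrightarrow> f z \<le> f w)"

definition global_minimizer_on :: "(real vec \<Rightarrow> real) \<Rightarrow> real vec set \<Rightarrow> real vec \<Rightarrow> bool" where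
  "global_minimizer_on f S z \<longleftrightarrow> z \<in> S \<and> (\<forall>w\<in>S. f z \<le> f w)"

end

theory Submission
  imports Defs "HOL-Analysis.Function_Topology" "Jordan_Normal_Form.Schur_Decomposition"
begin

lemma dot_self_nonneg: "0 \<le> (x::real vec) \<bullet> x"
  unfolding scalar_prod_def by (auto intro: sum_nonneg)

lemma dot_self_eq0: assumes "(x::real vec) \<in> carrier_vec n" "x \<bullet> x = 0" shows "x = 0\<^sub>v n"
proof -
  have "\<forall>i\<in>{0..<n}. x $ i * x $ i = 0"
    using assms by (subst sum_nonneg_eq_0_iff[symmetric]) (auto simp: scalar_prod_def)
  thus ?thesis using assms by (intro eq_vecI) auto
qed

lemma dot_comm: "(x::real vec) \<in> carrier_vec n \<Longrightarrow> y \<in> carrier_vec n \<Longrightarrow> x \<bullet> y = y \<bullet> x"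
  by (rule comm_scalar_prod)

lemma Q_sym: assumes A: "(A::real mat) \<in> carrier_mat n n" and s: "A\<^sup>T = A"
  and x: "x \<in> carrier_vec n" and y: "y \<in> carrier_vec n"
  shows "x \<bullet> (A *\<^sub>v y) = y \<bullet> (A *\<^sub>v x)"
proof -
  have "(A\<^sup>T *\<^sub>v x) \<bullet> y = x \<bullet> (A *\<^sub>v y)" by (rule transpose_vec_mult_scalar[OF A y x])
  hence "(A *\<^sub>v x) \<bullet> y = x \<bullet> (A *\<^sub>v y)" using s by simp
  moreover have "(A *\<^sub>v x) \<bullet> y = y \<bullet> (A *\<^sub>v x)" using A x y by (intro comm_scalar_prod[of _ n]) auto
  ultimately show ?thesis by simp
qed

lemma lin_dot: assumes x: "(x::real vec) \<in> carrier_vec n" and y: "y \<in> carrier_vec n"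
  shows "(a \<cdot>\<^sub>v x + b \<cdot>\<^sub>v y) \<bullet> (c \<cdot>\<^sub>v x + d \<cdot>\<^sub>v y) =
     a*c*(x \<bullet> x) + (a*d+b*c)*(x \<bullet> y) + b*d*(y \<bullet> y)"
proof -
  have yx: "y \<bullet> x = x \<bullet> y" using x y by (rule comm_scalar_prod[symmetric])
  show ?thesis using x y
    by (simp add: scalar_prod_add_distrib[of _ n] add_scalar_prod_distrib[of _ n] yx algebra_simps)
qed

lemma lin_Q: assumes A: "(A::real mat) \<in> carrier_mat n n" and s: "A\<^sup>T = A"
  and x: "x \<in> carrier_vec n" and y: "y \<in> carrier_vec n"
  shows "(a \<cdot>\<^sub>v x + b \<cdot>\<^sub>v y) \<bullet> (A *\<^sub>v (c \<cdot>\<^sub>v x + d \<cdot>\<^sub>v y)) =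
     a*c*(x \<bullet> (A *\<^sub>v x)) + (a*d+b*c)*(x \<bullet> (A *\<^sub>v y)) + b*d*(y \<bullet> (A *\<^sub>v y))"
proof -
  have yx: "y \<bullet> (A *\<^sub>v x) = x \<bullet> (A *\<^sub>v y)" using Q_sym[OF A s y x] .
  have Ax: "A *\<^sub>v x \<in> carrier_vec n" and Ay: "A *\<^sub>v y \<in> carrier_vec n" using A x y by auto
  show ?thesis using x y A Ax Ay
    by (simp add: mult_add_distrib_mat_vec[OF A] mult_mat_vec[OF A]
        scalar_prod_add_distrib[of _ n] add_scalar_prod_distrib[of _ n] yx algebra_simps)
qed

definition crv :: "real vec \<Rightarrow> real vec \<Rightarrow> real \<Rightarrow> real vec" where
  "crv x y t = cos t \<cdot>\<^sub>v x + sin t \<cdot>\<^sub>v y"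
definition dcrv :: "real vec \<Rightarrow> real vec \<Rightarrow> real \<Rightarrow> real vec" where
  "dcrv x y t = (- sin t) \<cdot>\<^sub>v x + cos t \<cdot>\<^sub>v y"

lemma crv_carrier[simp]: "x \<in> carrier_vec n \<Longrightarrow> y \<in> carrier_vec n \<Longrightarrow> crv x y t \<in> carrier_vec n"
  and dcrv_carrier[simp]: "x \<in> carrier_vec n \<Longrightarrow> y \<in> carrier_vec n \<Longrightarrow> dcrv x y t \<in> carrier_vec n"
  unfolding crv_def dcrv_def by auto

lemma crv_dim[simp]: "x \<in> carrier_vec n \<Longrightarrow> y \<in> carrier_vec n \<Longrightarrow> dim_vec (crv x y t) = n"
  and dcrv_dim[simp]: "x \<in> carrier_vec n \<Longrightarrow> y \<in> carrier_vec n \<Longrightarrow> dim_vec (dcrv x y t) = n"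
  unfolding crv_def dcrv_def by auto

lemma crv_index: "x \<in> carrier_vec n \<Longrightarrow> y \<in> carrier_vec n \<Longrightarrow> k < n \<Longrightarrow>
   crv x y t $ k = cos t * x $ k + sin t * y $ k"
  and dcrv_index: "x \<in> carrier_vec n \<Longrightarrow> y \<in> carrier_vec n \<Longrightarrow> k < n \<Longrightarrow>
   dcrv x y t $ k = - sin t * x $ k + cos t * y $ k"
  unfolding crv_def dcrv_def by auto

definition orthonormal2 :: "nat \<Rightarrow> real vec \<Rightarrow> real vec \<Rightarrow> bool" where
  "orthonormal2 n x y \<longleftrightarrow> x \<in> carrier_vec n \<and> y \<in> carrier_vec n \<and> x \<bullet> x = 1 \<and> y \<bullet> y = 1 \<and> x \<bullet> y = 0"

lemma crv_orth: assumes "orthonormal2 n x y"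
  shows "crv x y t \<bullet> crv x y t = 1" "dcrv x y t \<bullet> dcrv x y t = 1" "crv x y t \<bullet> dcrv x y t = 0"
    "orthonormal2 n (crv x y t) (dcrv x y t)"
proof -
  have x: "x \<in> carrier_vec n" and y: "y \<in> carrier_vec n" and xx: "x \<bullet> x = 1" and yy: "y \<bullet> y = 1"
    and xy: "x \<bullet> y = 0" using assms unfolding orthonormal2_def by auto
  have c2: "cos t * cos t + sin t * sin t = 1" using sin_cos_squared_add[of t] by (simp add: power2_eq_square)
  show 1: "crv x y t \<bullet> crv x y t = 1" unfolding crv_def lin_dot[OF x y] xx yy xy using c2 by simp
  show 2: "dcrv x y t \<bullet> dcrv x y t = 1" unfolding dcrv_def lin_dot[OF x y] xx yy xy using c2 by (simp add: algebra_simps)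
  show 3: "crv x y t \<bullet> dcrv x y t = 0" unfolding crv_def dcrv_def lin_dot[OF x y] xx yy xy by simp
  show "orthonormal2 n (crv x y t) (dcrv x y t)" using 1 2 3 x y unfolding orthonormal2_def by simp
qed

lemma crv_sphere: "orthonormal2 n x y \<Longrightarrow> crv x y t \<in> unit_sphere n"
  using crv_orth(1)[of n x y t] unfolding unit_sphere_def orthonormal2_def by auto

lemma two_minus_two_cos: "2 - 2 * cos (h::real) \<le> h^2"
proof -
  have "cos h = 1 - 2 * (sin (h/2))^2" using cos_double_sin[of "h/2"] by simp
  moreover have "\<bar>sin (h/2)\<bar> \<le> \<bar>h/2\<bar>" by (rule abs_sin_x_le_abs_x)
  hence "(sin (h/2))^2 \<le> (h/2)^2" by (metis abs_le_square_iff)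
  ultimately show ?thesis by (simp add: power_divide)
qed

lemma crv_dist: assumes "orthonormal2 n x y"
  shows "vdist (crv x y s) (crv x y t) \<le> \<bar>s - t\<bar>"
proof -
  have x: "x \<in> carrier_vec n" and y: "y \<in> carrier_vec n" and xx: "x \<bullet> x = 1" and yy: "y \<bullet> y = 1"
    and xy: "x \<bullet> y = 0" using assms unfolding orthonormal2_def by auto
  have e: "crv x y s - crv x y t = (cos s - cos t) \<cdot>\<^sub>v x + (sin s - sin t) \<cdot>\<^sub>v y"
    unfolding crv_def using x y by (intro eq_vecI) (auto simp: algebra_simps)
  have "(crv x y s - crv x y t) \<bullet> (crv x y s - crv x y t) = 2 - 2 * cos (s - t)"
    unfolding e lin_dot[OF x y] xx yy xy cos_diff
    using sin_cos_squared_add[of s] sin_cos_squared_add[of t] by (simp add: power2_diff algebra_simps)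
  also have "\<dots> \<le> (s - t)^2" by (rule two_minus_two_cos)
  finally show ?thesis unfolding vdist_def by (metis real_sqrt_abs real_sqrt_le_mono)
qed


lemma deriv_P4: "((\<lambda>t. (cos t * a + sin t * b)^4) has_real_derivative
   4 * (cos t * a + sin t * b)^3 * (- sin t * a + cos t * b)) (at t)"
  by (auto intro!: derivative_eq_intros simp: algebra_simps)

lemma deriv_P3P: "((\<lambda>t. (cos t * a + sin t * b)^3 * (- sin t * a + cos t * b)) has_real_derivative
   3 * (cos t * a + sin t * b)^2 * (- sin t * a + cos t * b)^2 - (cos t * a + sin t * b)^4) (at t)"
  by (auto intro!: derivative_eq_intros simp: algebra_simps power2_eq_square power3_eq_cube power4_eq_xxxx)

lemma deriv_quad: "((\<lambda>t. 1/2 * ((cos t)^2 * a + 2 * cos t * sin t * b + (sin t)^2 * c)) has_real_derivative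
   (- sin t * cos t * a + ((cos t)^2 - (sin t)^2) * b + sin t * cos t * c)) (at t)"
  by (auto intro!: derivative_eq_intros simp: algebra_simps power2_eq_square)

lemma deriv_quad2: "((\<lambda>t. (- sin t * cos t * a + ((cos t)^2 - (sin t)^2) * b + sin t * cos t * c)) has_real_derivative
   ((sin t)^2 * a - 2 * sin t * cos t * b + (cos t)^2 * c) - ((cos t)^2 * a + 2 * cos t * sin t * b + (sin t)^2 * c)) (at t)"
  by (auto intro!: derivative_eq_intros simp: algebra_simps power2_eq_square)

locale symmat =
  fixes n :: nat and A :: "real mat"
  assumes A: "A \<in> carrier_mat n n" and Asym: "A\<^sup>T = A"
begin

definition Q :: "real vec \<Rightarrow> real vec \<Rightarrow> real" where "Q x y = x \<bullet> (A *\<^sub>v y)"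

lemma Qsym: "x \<in> carrier_vec n \<Longrightarrow> y \<in> carrier_vec n \<Longrightarrow> Q x y = Q y x"
  unfolding Q_def using Q_sym[OF A Asym] by blast

definition D1 :: "real \<Rightarrow> real vec \<Rightarrow> real vec \<Rightarrow> real \<Rightarrow> real" where
  "D1 \<beta> x y t = Q (dcrv x y t) (crv x y t) + 2 * \<beta> * (\<Sum>k<n. (crv x y t $ k)^3 * (dcrv x y t $ k))"

definition D2 :: "real \<Rightarrow> real vec \<Rightarrow> real vec \<Rightarrow> real \<Rightarrow> real" where
  "D2 \<beta> x y t = Q (dcrv x y t) (dcrv x y t) - Q (crv x y t) (crv x y t)
     + 2 * \<beta> * (\<Sum>k<n. 3 * (crv x y t $ k)^2 * (dcrv x y t $ k)^2 - (crv x y t $ k)^4)"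

lemma obj_crv: assumes x: "x \<in> carrier_vec n" and y: "y \<in> carrier_vec n"
  shows "obj A \<beta> (crv x y t) = 1/2 * ((cos t)^2 * Q x x + 2 * cos t * sin t * Q x y + (sin t)^2 * Q y y)
     + \<beta>/2 * (\<Sum>k<n. (cos t * x $ k + sin t * y $ k)^4)"
proof -
  have "crv x y t \<bullet> (A *\<^sub>v crv x y t) = (cos t)^2 * Q x x + 2 * cos t * sin t * Q x y + (sin t)^2 * Q y y"
    unfolding crv_def lin_Q[OF A Asym x y] Q_def by (simp add: power2_eq_square)
  moreover have "(\<Sum>k<dim_vec (crv x y t). (crv x y t $ k)^4) = (\<Sum>k<n. (cos t * x $ k + sin t * y $ k)^4)"
    using x y by (auto simp: crv_index intro!: sum.cong)
  ultimately show ?thesis unfolding obj_def by simp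
qed

lemma D1_eq: assumes x: "x \<in> carrier_vec n" and y: "y \<in> carrier_vec n"
  shows "D1 \<beta> x y t = (- sin t * cos t * Q x x + ((cos t)^2 - (sin t)^2) * Q x y + sin t * cos t * Q y y)
     + \<beta>/2 * (\<Sum>k<n. 4 * (cos t * x $ k + sin t * y $ k)^3 * (- sin t * x $ k + cos t * y $ k))"
proof -
  have "Q (dcrv x y t) (crv x y t) = - sin t * cos t * Q x x + ((cos t)^2 - (sin t)^2) * Q x y + sin t * cos t * Q y y"
    unfolding crv_def dcrv_def Q_def lin_Q[OF A Asym x y] by (simp add: power2_eq_square algebra_simps)
  moreover have "(\<Sum>k<n. (crv x y t $ k)^3 * (dcrv x y t $ k)) = (\<Sum>k<n. (cos t * x $ k + sin t * y $ k)^3 * (- sin t * x $ k + cos t * y $ k))"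
    using x y by (auto simp: crv_index dcrv_index intro!: sum.cong)
  ultimately show ?thesis unfolding D1_def by (simp add: sum_distrib_left algebra_simps)
qed

lemma D2_eq: assumes x: "x \<in> carrier_vec n" and y: "y \<in> carrier_vec n"
  shows "D2 \<beta> x y t = ((sin t)^2 * Q x x - 2 * sin t * cos t * Q x y + (cos t)^2 * Q y y) - ((cos t)^2 * Q x x + 2 * cos t * sin t * Q x y + (sin t)^2 * Q y y)
     + 2 * \<beta> * (\<Sum>k<n. 3 * (cos t * x $ k + sin t * y $ k)^2 * (- sin t * x $ k + cos t * y $ k)^2 - (cos t * x $ k + sin t * y $ k)^4)"
proof -
  have "Q (dcrv x y t) (dcrv x y t) = (sin t)^2 * Q x x - 2 * sin t * cos t * Q x y + (cos t)^2 * Q y y"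
    unfolding crv_def dcrv_def Q_def lin_Q[OF A Asym x y] by (simp add: power2_eq_square algebra_simps)
  moreover have "Q (crv x y t) (crv x y t) = (cos t)^2 * Q x x + 2 * cos t * sin t * Q x y + (sin t)^2 * Q y y"
    unfolding crv_def dcrv_def Q_def lin_Q[OF A Asym x y] by (simp add: power2_eq_square algebra_simps)
  moreover have "(\<Sum>k<n. 3 * (crv x y t $ k)^2 * (dcrv x y t $ k)^2 - (crv x y t $ k)^4) = (\<Sum>k<n. 3 * (cos t * x $ k + sin t * y $ k)^2 * (- sin t * x $ k + cos t * y $ k)^2 - (cos t * x $ k + sin t * y $ k)^4)"
    using x y by (auto simp: crv_index dcrv_index intro!: sum.cong)
  ultimately show ?thesis unfolding D2_def by simp
qed

lemma G_deriv: assumes x: "x \<in> carrier_vec n" and y: "y \<in> carrier_vec n"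
  shows "((\<lambda>t. obj A \<beta> (crv x y t)) has_real_derivative D1 \<beta> x y t) (at t)"
proof -
  have s: "((\<lambda>t. (\<Sum>k<n. (cos t * x $ k + sin t * y $ k)^4)) has_real_derivative
      (\<Sum>k<n. 4 * (cos t * x $ k + sin t * y $ k)^3 * (- sin t * x $ k + cos t * y $ k))) (at t)"
    by (rule DERIV_sum) (rule deriv_P4)
  have "((\<lambda>t. 1/2 * ((cos t)^2 * Q x x + 2 * cos t * sin t * Q x y + (sin t)^2 * Q y y)
     + \<beta>/2 * (\<Sum>k<n. (cos t * x $ k + sin t * y $ k)^4)) has_real_derivative D1 \<beta> x y t) (at t)"
    unfolding D1_eq[OF x y] by (intro DERIV_add DERIV_cmult deriv_quad s)
  thus ?thesis unfolding obj_crv[OF x y] .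
qed

lemma D1_deriv: assumes x: "x \<in> carrier_vec n" and y: "y \<in> carrier_vec n"
  shows "((\<lambda>t. D1 \<beta> x y t) has_real_derivative D2 \<beta> x y t) (at t)"
proof -
  have s: "((\<lambda>t. (\<Sum>k<n. 4 * (cos t * x $ k + sin t * y $ k)^3 * (- sin t * x $ k + cos t * y $ k))) has_real_derivative
      (\<Sum>k<n. 4 * (3 * (cos t * x $ k + sin t * y $ k)^2 * (- sin t * x $ k + cos t * y $ k)^2 - (cos t * x $ k + sin t * y $ k)^4))) (at t)"
    by (rule DERIV_sum) (use DERIV_cmult[OF deriv_P3P, of 4] in \<open>simp add: mult.assoc\<close>)
  have "((\<lambda>t. (- sin t * cos t * Q x x + ((cos t)^2 - (sin t)^2) * Q x y + sin t * cos t * Q y y)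
     + \<beta>/2 * (\<Sum>k<n. 4 * (cos t * x $ k + sin t * y $ k)^3 * (- sin t * x $ k + cos t * y $ k))) has_real_derivative
     (((sin t)^2 * Q x x - 2 * sin t * cos t * Q x y + (cos t)^2 * Q y y) - ((cos t)^2 * Q x x + 2 * cos t * sin t * Q x y + (sin t)^2 * Q y y))
     + \<beta>/2 * (\<Sum>k<n. 4 * (3 * (cos t * x $ k + sin t * y $ k)^2 * (- sin t * x $ k + cos t * y $ k)^2 - (cos t * x $ k + sin t * y $ k)^4))) (at t)"
    by (intro DERIV_add DERIV_cmult deriv_quad2 s)
  moreover have "(((sin t)^2 * Q x x - 2 * sin t * cos t * Q x y + (cos t)^2 * Q y y) - ((cos t)^2 * Q x x + 2 * cos t * sin t * Q x y + (sin t)^2 * Q y y))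
     + \<beta>/2 * (\<Sum>k<n. 4 * (3 * (cos t * x $ k + sin t * y $ k)^2 * (- sin t * x $ k + cos t * y $ k)^2 - (cos t * x $ k + sin t * y $ k)^4))
     = D2 \<beta> x y t"
    unfolding D2_eq[OF x y] by (simp add: sum_distrib_left algebra_simps)
  ultimately show ?thesis using D1_eq[OF x y, of \<beta>] by (simp add: fun_eq_iff)
qed

end


lemma second_order:
  fixes g g1 g2 :: "real \<Rightarrow> real"
  assumes d1: "\<And>t. (g has_real_derivative g1 t) (at t)"
    and d2: "\<And>t. (g1 has_real_derivative g2 t) (at t)"
    and d: "d > 0" and lm: "\<forall>t. \<bar>t - t0\<bar> < d \<longrightarrow> g t0 \<le> g t"
  shows "g1 t0 = 0" "g2 t0 \<ge> 0"
proof -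
  have lm': "\<forall>y. \<bar>t0 - y\<bar> < d \<longrightarrow> g t0 \<le> g y" using lm by (simp add: abs_minus_commute)
  show z: "g1 t0 = 0" by (rule DERIV_local_min[OF d1 d lm'])
  show "g2 t0 \<ge> 0"
  proof (rule ccontr)
    assume "\<not> g2 t0 \<ge> 0"
    hence "g2 t0 < 0" by simp
    from DERIV_neg_dec_right[OF d2 this] obtain e where e: "e > 0"
      and he: "\<forall>h>0. h < e \<longrightarrow> g1 (t0 + h) < g1 t0" by blast
    define h where "h = min d e / 2"
    have h: "h > 0" "h < d" "h < e" using d e unfolding h_def by auto
    from MVT2[of t0 "t0 + h" g g1] d1 h obtain z where z1: "z > t0" "z < t0 + h"
      and z2: "g (t0 + h) - g t0 = (t0 + h - t0) * g1 z" by auto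
    have "g1 z < 0" using he[rule_format, of "z - t0"] z1 h z by auto
    hence "g (t0 + h) < g t0" using z2 h mult_pos_neg[OF h(1) \<open>g1 z < 0\<close>] by simp
    moreover have "g t0 \<le> g (t0 + h)" using lm h by auto
    ultimately show False by simp
  qed
qed

lemma left_end:
  fixes g :: "real \<Rightarrow> real"
  assumes d1: "(g has_real_derivative l) (at a)" and lm: "\<exists>d>0. \<forall>h. 0 < h \<and> h < d \<longrightarrow> g a \<le> g (a + h)"
  shows "l \<ge> 0"
proof (rule ccontr)
  assume "\<not> l \<ge> 0" hence "l < 0" by simp
  from DERIV_neg_dec_right[OF d1 this] obtain e where e: "e > 0" and he: "\<forall>h>0. h < e \<longrightarrow> g (a + h) < g a" by blast
  from lm obtain d where d: "d > 0" and hd: "\<forall>h. 0 < h \<and> h < d \<longrightarrow> g a \<le> g (a + h)" by blast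
  have "g (a + min d e / 2) < g a" using he e d by auto
  moreover have "g a \<le> g (a + min d e / 2)" using hd e d by auto
  ultimately show False by simp
qed

lemma right_end:
  fixes g :: "real \<Rightarrow> real"
  assumes d1: "(g has_real_derivative l) (at a)" and lm: "\<exists>d>0. \<forall>h. 0 < h \<and> h < d \<longrightarrow> g a \<le> g (a - h)"
  shows "l \<le> 0"
proof (rule ccontr)
  assume "\<not> l \<le> 0" hence "l > 0" by simp
  from DERIV_pos_inc_left[OF d1 this] obtain e where e: "e > 0" and he: "\<forall>h>0. h < e \<longrightarrow> g (a - h) < g a" by blast
  from lm obtain d where d: "d > 0" and hd: "\<forall>h. 0 < h \<and> h < d \<longrightarrow> g a \<le> g (a - h)" by blast
  have "g (a - min d e / 2) < g a" using he e d by auto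
  moreover have "g a \<le> g (a - min d e / 2)" using hd e d by auto
  ultimately show False by simp
qed

lemma dot_sum: "(x::real vec) \<in> carrier_vec n \<Longrightarrow> y \<in> carrier_vec n \<Longrightarrow> x \<bullet> y = (\<Sum>k<n. x $ k * y $ k)"
  unfolding scalar_prod_def by (simp add: atLeast0LessThan)

lemma bessel: assumes o: "orthonormal2 n u w" and e: "e \<in> carrier_vec n"
  shows "(e \<bullet> u)^2 + (e \<bullet> w)^2 \<le> e \<bullet> e"
proof -
  have u: "u \<in> carrier_vec n" and w: "w \<in> carrier_vec n" and uu: "u \<bullet> u = 1" and ww: "w \<bullet> w = 1"
    and uw: "u \<bullet> w = 0" using o unfolding orthonormal2_def by auto
  define a where "a = e \<bullet> u"
  define b where "b = e \<bullet> w"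
  define r where "r = e + ((- a) \<cdot>\<^sub>v u + (- b) \<cdot>\<^sub>v w)"
  have ue: "u \<bullet> e = a" using comm_scalar_prod[OF u e] a_def by simp
  have we: "w \<bullet> e = b" using comm_scalar_prod[OF w e] b_def by simp
  have wu: "w \<bullet> u = 0" using comm_scalar_prod[OF w u] uw by simp
  have l: "((- a) \<cdot>\<^sub>v u + (- b) \<cdot>\<^sub>v w) \<in> carrier_vec n" using u w by auto
  have l2: "((- a) \<cdot>\<^sub>v u + (- b) \<cdot>\<^sub>v w) \<bullet> ((- a) \<cdot>\<^sub>v u + (- b) \<cdot>\<^sub>v w) = a^2 + b^2"
    unfolding lin_dot[OF u w] uu ww uw by (simp add: power2_eq_square)
  have l3: "e \<bullet> ((- a) \<cdot>\<^sub>v u + (- b) \<cdot>\<^sub>v w) = 0 - a^2 - b^2"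
    using e u w by (simp add: scalar_prod_add_distrib[of _ n] a_def b_def power2_eq_square)
  have l4: "((- a) \<cdot>\<^sub>v u + (- b) \<cdot>\<^sub>v w) \<bullet> e = 0 - a^2 - b^2"
    using comm_scalar_prod[OF l e] l3 by simp
  have "r \<bullet> r = e \<bullet> e - a^2 - b^2"
    unfolding r_def using e l
    by (simp add: scalar_prod_add_distrib[of _ n] add_scalar_prod_distrib[of _ n] l2 l3 l4)
  with dot_self_nonneg[of r] show ?thesis unfolding a_def b_def by simp
qed

lemma sq_id: "((a::real)^2 + b^2)^2 - 4 * (a^2 * b^2) = (a^2 - b^2)^2"
  by (simp add: power2_sum power2_diff algebra_simps)

lemma orth_bounds: assumes o: "orthonormal2 n p q"
  shows "\<And>k. k < n \<Longrightarrow> (p $ k)^2 + (q $ k)^2 \<le> 1"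
    "\<bar>\<Sum>k<n. (p $ k)^3 * (q $ k)\<bar> \<le> 1/2"
    "0 \<le> (\<Sum>k<n. (p $ k)^2 * (q $ k)^2)" "(\<Sum>k<n. (p $ k)^2 * (q $ k)^2) \<le> 1/2"
    "0 \<le> (\<Sum>k<n. (p $ k)^4)" "(\<Sum>k<n. (p $ k)^4) \<le> 1"
proof -
  have p: "p \<in> carrier_vec n" and q: "q \<in> carrier_vec n" and pp: "p \<bullet> p = 1" and qq: "q \<bullet> q = 1"
    and pq: "p \<bullet> q = 0" using o unfolding orthonormal2_def by auto
  have sp: "(\<Sum>k<n. (p $ k)^2) = 1" using pp dot_sum[OF p p] by (simp add: power2_eq_square)
  have sq: "(\<Sum>k<n. (q $ k)^2) = 1" using qq dot_sum[OF q q] by (simp add: power2_eq_square)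
  show b: "\<And>k. k < n \<Longrightarrow> (p $ k)^2 + (q $ k)^2 \<le> 1"
  proof -
    fix k assume k: "k < n"
    have "(unit_vec n k \<bullet> p)^2 + (unit_vec n k \<bullet> q)^2 \<le> unit_vec n k \<bullet> unit_vec n k"
      by (rule bessel[OF o]) simp
    thus "(p $ k)^2 + (q $ k)^2 \<le> 1" using k p q by (simp add: scalar_prod_left_unit)
  qed
  have "\<bar>\<Sum>k<n. (p $ k)^3 * (q $ k)\<bar> \<le> (\<Sum>k<n. \<bar>(p $ k)^3 * (q $ k)\<bar>)" by (rule sum_abs)
  also have "\<dots> \<le> (\<Sum>k<n. (p $ k)^2 / 2)"
  proof (rule sum_mono)
    fix k assume "k \<in> {..<n}"
    hence h: "(p $ k)^2 + (q $ k)^2 \<le> 1" using b by auto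
    have e1: "(p $ k)^2 + (q $ k)^2 - 2 * \<bar>p $ k * q $ k\<bar> = (\<bar>p $ k\<bar> - \<bar>q $ k\<bar>)^2"
      by (simp add: power2_diff abs_mult)
    have "2 * \<bar>p $ k * q $ k\<bar> \<le> (p $ k)^2 + (q $ k)^2"
      using e1 zero_le_power2[of "\<bar>p $ k\<bar> - \<bar>q $ k\<bar>"] by linarith
    hence "2 * \<bar>p $ k * q $ k\<bar> \<le> 1" using h by simp
    moreover have "\<bar>(p $ k)^3 * (q $ k)\<bar> = (p $ k)^2 * \<bar>p $ k * q $ k\<bar>"
      by (simp add: abs_mult power2_eq_square power3_eq_cube)
    moreover have "(p $ k)^2 * (2 * \<bar>p $ k * q $ k\<bar>) \<le> (p $ k)^2 * 1"
      by (rule mult_left_mono) (use calculation in auto)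
    ultimately show "\<bar>(p $ k)^3 * (q $ k)\<bar> \<le> (p $ k)^2 / 2" by simp
  qed
  also have "\<dots> = 1/2" using sp by (simp add: sum_divide_distrib[symmetric])
  finally show "\<bar>\<Sum>k<n. (p $ k)^3 * (q $ k)\<bar> \<le> 1/2" .
  show "0 \<le> (\<Sum>k<n. (p $ k)^2 * (q $ k)^2)" by (intro sum_nonneg) simp
  have "(\<Sum>k<n. (p $ k)^2 * (q $ k)^2) \<le> (\<Sum>k<n. ((p $ k)^2 + (q $ k)^2) / 4)"
  proof (rule sum_mono)
    fix k assume "k \<in> {..<n}"
    hence h: "(p $ k)^2 + (q $ k)^2 \<le> 1" using b by auto
    have e1: "((p $ k)^2 + (q $ k)^2)^2 - 4 * ((p $ k)^2 * (q $ k)^2) = ((p $ k)^2 - (q $ k)^2)^2"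
      by (rule sq_id)
    have "4 * ((p $ k)^2 * (q $ k)^2) \<le> ((p $ k)^2 + (q $ k)^2)^2"
      using e1 zero_le_power2[of "(p $ k)^2 - (q $ k)^2"] by linarith
    also have "\<dots> \<le> (p $ k)^2 + (q $ k)^2"
      using h by (simp add: power2_eq_square mult_left_le)
    finally show "(p $ k)^2 * (q $ k)^2 \<le> ((p $ k)^2 + (q $ k)^2) / 4" by simp
  qed
  also have "\<dots> = 1/2" using sp sq by (simp add: sum_divide_distrib[symmetric] sum.distrib)
  finally show "(\<Sum>k<n. (p $ k)^2 * (q $ k)^2) \<le> 1/2" .
  show "0 \<le> (\<Sum>k<n. (p $ k)^4)" by (intro sum_nonneg) simp
  have "(\<Sum>k<n. (p $ k)^4) \<le> (\<Sum>k<n. (p $ k)^2)"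
  proof (rule sum_mono)
    fix k assume "k \<in> {..<n}"
    hence "k < n" by simp
    hence h: "(p $ k)^2 \<le> 1" using b[of k] zero_le_power2[of "q $ k"] by linarith
    have "(p $ k)^4 = (p $ k)^2 * (p $ k)^2" by (simp add: power4_eq_xxxx power2_eq_square)
    also have "\<dots> \<le> (p $ k)^2" by (rule mult_left_le[OF h zero_le_power2])
    finally show "(p $ k)^4 \<le> (p $ k)^2" .
  qed
  thus "(\<Sum>k<n. (p $ k)^4) \<le> 1" using sp by simp
qed


lemma compact_box: "compact ((UNIV::nat set) \<rightarrow>\<^sub>E {-1..(1::real)})"
proof -
  have "compactin (product_topology (\<lambda>_. euclidean) UNIV) ((UNIV::nat set) \<rightarrow>\<^sub>E {-1..(1::real)})"
    by (subst compactin_PiE) (simp add: compactin_euclidean_iff)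
  thus ?thesis by (simp add: euclidean_product_topology compactin_euclidean_iff)
qed

lemma exists_min_sphere:
  fixes F :: "real vec \<Rightarrow> real" and C :: "real vec \<Rightarrow> bool"
  assumes cont: "continuous_on UNIV (\<lambda>x::nat\<Rightarrow>real. F (vec n x))"
   and closedC: "closed {x::nat\<Rightarrow>real. C (vec n x)}"
   and ne: "\<exists>z\<in>unit_sphere n. C z"
  shows "\<exists>z\<in>unit_sphere n. C z \<and> (\<forall>w\<in>unit_sphere n. C w \<longrightarrow> F z \<le> F w)"
proof -
  define K where "K = {x::nat\<Rightarrow>real. \<forall>i. n \<le> i \<longrightarrow> x i = 0} \<inter> {x. (\<Sum>i<n. (x i)^2) = 1} \<inter> {x. C (vec n x)}"
  have c1: "closed {x::nat\<Rightarrow>real. \<forall>i. n \<le> i \<longrightarrow> x i = 0}"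
  proof -
    have "{x::nat\<Rightarrow>real. \<forall>i. n \<le> i \<longrightarrow> x i = 0} = (\<Inter>i\<in>{n..}. {x. x i = 0})" by auto
    moreover have "closed (\<Inter>i\<in>{n..}. {x::nat\<Rightarrow>real. x i = 0})"
      by (intro closed_INT ballI closed_Collect_eq continuous_on_product_coordinates continuous_on_const)
    ultimately show ?thesis by simp
  qed
  have c2: "closed {x::nat\<Rightarrow>real. (\<Sum>i<n. (x i)^2) = 1}"
    by (intro closed_Collect_eq continuous_intros continuous_on_product_coordinates)
  have clK: "closed K" unfolding K_def using c1 c2 closedC by (intro closed_Int)
  have sub: "K \<subseteq> (UNIV::nat set) \<rightarrow>\<^sub>E {-1..(1::real)}"
  proof
    fix x assume x: "x \<in> K"
    have "\<forall>i. x i \<in> {-1..1}"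
    proof
      fix i
      show "x i \<in> {-1..1}"
      proof (cases "i < n")
        case True
        have "(x i)^2 \<le> (\<Sum>i<n. (x i)^2)" using True by (intro member_le_sum) auto
        hence "(x i)^2 \<le> 1" using x unfolding K_def by simp
        hence "\<bar>x i\<bar> \<le> 1" by (simp add: abs_square_le_1)
        thus ?thesis by (simp add: abs_le_iff)
      next
        case False thus ?thesis using x unfolding K_def by simp
      qed
    qed
    thus "x \<in> (UNIV::nat set) \<rightarrow>\<^sub>E {-1..(1::real)}" by (simp add: PiE_UNIV_domain Pi_def)
  qed
  have cK: "compact K"
  proof -
    have "compact (((UNIV::nat set) \<rightarrow>\<^sub>E {-1..(1::real)}) \<inter> K)" by (rule compact_Int_closed[OF compact_box clK])
    moreover have "((UNIV::nat set) \<rightarrow>\<^sub>E {-1..(1::real)}) \<inter> K = K" using sub by blast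
    ultimately show ?thesis by simp
  qed
  define emb :: "real vec \<Rightarrow> nat \<Rightarrow> real" where "emb w = (\<lambda>i. if i < n then w $ i else 0)" for w
  have emb_vec: "vec n (emb w) = w" if "w \<in> carrier_vec n" for w
    using that unfolding emb_def by (intro eq_vecI) auto
  have embK: "emb w \<in> K" if "w \<in> unit_sphere n" "C w" for w
  proof -
    have w: "w \<in> carrier_vec n" "w \<bullet> w = 1" using that unfolding unit_sphere_def by auto
    have "(\<Sum>i<n. (emb w i)^2) = w \<bullet> w" unfolding dot_sum[OF w(1) w(1)] emb_def
      by (simp add: power2_eq_square)
    thus ?thesis unfolding K_def using w that emb_vec[OF w(1)] by (auto simp: emb_def)
  qed
  have neK: "K \<noteq> {}" using ne embK by blast
  have contK: "continuous_on K (\<lambda>x. F (vec n x))" by (rule continuous_on_subset[OF cont]) simp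
  from continuous_attains_inf[OF cK neK contK] obtain x0 where x0: "x0 \<in> K"
    and min: "\<forall>y\<in>K. F (vec n x0) \<le> F (vec n y)" by blast
  have z0: "vec n x0 \<in> unit_sphere n"
  proof -
    have "vec n x0 \<bullet> vec n x0 = (\<Sum>i<n. (x0 i)^2)"
      by (subst dot_sum[of _ n]) (auto simp: power2_eq_square)
    thus ?thesis using x0 unfolding K_def unit_sphere_def by auto
  qed
  show ?thesis
  proof (intro bexI[OF _ z0] conjI ballI impI)
    show "C (vec n x0)" using x0 unfolding K_def by simp
    fix w assume w: "w \<in> unit_sphere n" "C w"
    have "F (vec n x0) \<le> F (vec n (emb w))" using min embK[OF w] by blast
    thus "F (vec n x0) \<le> F w" using emb_vec w unfolding unit_sphere_def by auto
  qed
qed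

lemma quad_vec: assumes A: "(A::real mat) \<in> carrier_mat n n"
  shows "vec n x \<bullet> (A *\<^sub>v vec n x) = (\<Sum>i<n. x i * (\<Sum>j<n. A $$ (i,j) * x j))"
proof -
  have "vec n x \<bullet> (A *\<^sub>v vec n x) = (\<Sum>i<n. vec n x $ i * (A *\<^sub>v vec n x) $ i)"
    using A by (intro dot_sum) auto
  also have "\<dots> = (\<Sum>i<n. x i * (\<Sum>j<n. A $$ (i,j) * x j))"
  proof (rule sum.cong[OF refl])
    fix i assume i: "i \<in> {..<n}"
    have "(A *\<^sub>v vec n x) $ i = row A i \<bullet> vec n x" using A i by (intro index_mult_mat_vec) auto
    also have "\<dots> = (\<Sum>j<n. row A i $ j * vec n x $ j)" using A by (intro dot_sum) auto
    also have "\<dots> = (\<Sum>j<n. A $$ (i,j) * x j)" using A i by (intro sum.cong) auto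
    finally show "vec n x $ i * (A *\<^sub>v vec n x) $ i = x i * (\<Sum>j<n. A $$ (i,j) * x j)" using i by simp
  qed
  finally show ?thesis .
qed

lemma cont_quad: assumes A: "(A::real mat) \<in> carrier_mat n n"
  shows "continuous_on UNIV (\<lambda>x::nat\<Rightarrow>real. c * (vec n x \<bullet> (A *\<^sub>v vec n x)))"
  unfolding quad_vec[OF A] by (intro continuous_intros continuous_on_product_coordinates)

lemma cont_obj: assumes A: "(A::real mat) \<in> carrier_mat n n"
  shows "continuous_on UNIV (\<lambda>x::nat\<Rightarrow>real. obj A \<beta> (vec n x))"
proof -
  have "obj A \<beta> (vec n x) = 1/2 * (\<Sum>i<n. x i * (\<Sum>j<n. A $$ (i,j) * x j)) + \<beta>/2 * (\<Sum>k<n. (x k)^4)" for x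
    unfolding obj_def quad_vec[OF A] by simp
  hence e: "(\<lambda>x::nat\<Rightarrow>real. obj A \<beta> (vec n x)) = (\<lambda>x. 1/2 * (\<Sum>i<n. x i * (\<Sum>j<n. A $$ (i,j) * x j)) + \<beta>/2 * (\<Sum>k<n. (x k)^4))"
    by (intro ext)
  show ?thesis unfolding e by (intro continuous_intros continuous_on_product_coordinates)
qed

lemma closed_orth: assumes w: "(w::real vec) \<in> carrier_vec n"
  shows "closed {x::nat\<Rightarrow>real. w \<bullet> vec n x = 0}"
proof -
  have "w \<bullet> vec n x = (\<Sum>i<n. w $ i * x i)" for x using w by (subst dot_sum[of _ n]) auto
  hence e: "{x::nat\<Rightarrow>real. w \<bullet> vec n x = 0} = {x. (\<Sum>i<n. w $ i * x i) = 0}" by simp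
  show ?thesis unfolding e by (intro closed_Collect_eq continuous_intros continuous_on_product_coordinates)
qed


lemma real_stat: assumes "\<forall>t::real. 0 \<le> 2*t*b + t^2*d" shows "b = 0"
proof (rule ccontr)
  assume b: "b \<noteq> 0"
  define K where "K = \<bar>d\<bar> + 1"
  have K: "K > 0" "\<bar>d\<bar> \<le> K" unfolding K_def by auto
  define t where "t = - b / K"
  have "0 \<le> 2*t*b + t^2*d" using assms by blast
  also have "2*t*b + t^2*d = (- 2 * b^2 * K + b^2 * d) / K^2"
    unfolding t_def using K by (simp add: field_simps power2_eq_square)
  also have "\<dots> < 0"
  proof -
    have "b^2 * d \<le> b^2 * K" using K by (intro mult_left_mono) auto
    moreover have "b^2 * K > 0" using b K by simp
    ultimately have "- 2 * b^2 * K + b^2 * d < 0" by linarith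
    thus ?thesis using K by (simp add: divide_neg_pos)
  qed
  finally show False by simp
qed

context symmat
begin

lemma Q_lin1: assumes z: "z \<in> carrier_vec n" and u: "u \<in> carrier_vec n"
  shows "Q (1 \<cdot>\<^sub>v z + t \<cdot>\<^sub>v u) (1 \<cdot>\<^sub>v z + t \<cdot>\<^sub>v u) = Q z z + 2*t*Q z u + t^2 * Q u u"
    "(1 \<cdot>\<^sub>v z + t \<cdot>\<^sub>v u) \<bullet> (1 \<cdot>\<^sub>v z + t \<cdot>\<^sub>v u) = z \<bullet> z + 2*t*(z \<bullet> u) + t^2 * (u \<bullet> u)"
  unfolding Q_def lin_Q[OF A Asym z u] lin_dot[OF z u] by (simp_all add: power2_eq_square)

lemma Q_carrier: "x \<in> carrier_vec n \<Longrightarrow> A *\<^sub>v x \<in> carrier_vec n" using A by auto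

lemma Q_zero: "Q (0\<^sub>v n) (0\<^sub>v n) = 0" unfolding Q_def using A by simp

lemma Q_smult: "x \<in> carrier_vec n \<Longrightarrow> Q (c \<cdot>\<^sub>v x) (c \<cdot>\<^sub>v x) = c^2 * Q x x"
  unfolding Q_def using A by (simp add: mult_mat_vec power2_eq_square)

lemma hom_bound:
  assumes P: "\<And>y c. P y \<Longrightarrow> P (c \<cdot>\<^sub>v y)"
    and y: "y \<in> carrier_vec n" "P y"
  shows "(\<forall>z\<in>unit_sphere n. P z \<longrightarrow> a \<le> Q z z) \<Longrightarrow> a * (y \<bullet> y) \<le> Q y y"
    and "(\<forall>z\<in>unit_sphere n. P z \<longrightarrow> Q z z \<le> a) \<Longrightarrow> Q y y \<le> a * (y \<bullet> y)"
proof -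
  have cases: "y \<bullet> y = 0 \<and> y = 0\<^sub>v n \<or> (y \<bullet> y > 0 \<and> (1 / sqrt (y \<bullet> y)) \<cdot>\<^sub>v y \<in> unit_sphere n \<and>
      Q ((1 / sqrt (y \<bullet> y)) \<cdot>\<^sub>v y) ((1 / sqrt (y \<bullet> y)) \<cdot>\<^sub>v y) = Q y y / (y \<bullet> y))"
  proof (cases "y \<bullet> y = 0")
    case True thus ?thesis using dot_self_eq0[OF y(1)] by simp
  next
    case False
    hence pos: "y \<bullet> y > 0" using dot_self_nonneg[of y] by simp
    have "((1 / sqrt (y \<bullet> y)) \<cdot>\<^sub>v y) \<bullet> ((1 / sqrt (y \<bullet> y)) \<cdot>\<^sub>v y) = (1 / sqrt (y \<bullet> y))^2 * (y \<bullet> y)"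
      using y by (simp add: power2_eq_square)
    also have "\<dots> = 1" using pos by (simp add: power_divide)
    finally have "(1 / sqrt (y \<bullet> y)) \<cdot>\<^sub>v y \<in> unit_sphere n" using y unfolding unit_sphere_def by auto
    moreover have "Q ((1 / sqrt (y \<bullet> y)) \<cdot>\<^sub>v y) ((1 / sqrt (y \<bullet> y)) \<cdot>\<^sub>v y) = Q y y / (y \<bullet> y)"
      using Q_smult[OF y(1)] pos by (simp add: power_divide)
    ultimately show ?thesis using pos by simp
  qed
  show "(\<forall>z\<in>unit_sphere n. P z \<longrightarrow> a \<le> Q z z) \<Longrightarrow> a * (y \<bullet> y) \<le> Q y y"
  proof -
    assume h: "\<forall>z\<in>unit_sphere n. P z \<longrightarrow> a \<le> Q z z"
    from cases show ?thesis
    proof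
      assume "y \<bullet> y = 0 \<and> y = 0\<^sub>v n" thus ?thesis using Q_zero by simp
    next
      assume c: "y \<bullet> y > 0 \<and> (1 / sqrt (y \<bullet> y)) \<cdot>\<^sub>v y \<in> unit_sphere n \<and>
      Q ((1 / sqrt (y \<bullet> y)) \<cdot>\<^sub>v y) ((1 / sqrt (y \<bullet> y)) \<cdot>\<^sub>v y) = Q y y / (y \<bullet> y)"
      hence "a \<le> Q y y / (y \<bullet> y)" using h P[OF y(2)] by metis
      thus ?thesis using c by (simp add: field_simps)
    qed
  qed
  show "(\<forall>z\<in>unit_sphere n. P z \<longrightarrow> Q z z \<le> a) \<Longrightarrow> Q y y \<le> a * (y \<bullet> y)"
  proof -
    assume h: "\<forall>z\<in>unit_sphere n. P z \<longrightarrow> Q z z \<le> a"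
    from cases show ?thesis
    proof
      assume "y \<bullet> y = 0 \<and> y = 0\<^sub>v n" thus ?thesis using Q_zero by simp
    next
      assume c: "y \<bullet> y > 0 \<and> (1 / sqrt (y \<bullet> y)) \<cdot>\<^sub>v y \<in> unit_sphere n \<and>
      Q ((1 / sqrt (y \<bullet> y)) \<cdot>\<^sub>v y) ((1 / sqrt (y \<bullet> y)) \<cdot>\<^sub>v y) = Q y y / (y \<bullet> y)"
      hence "Q y y / (y \<bullet> y) \<le> a" using h P[OF y(2)] by metis
      thus ?thesis using c by (simp add: field_simps)
    qed
  qed
qed

lemma stat_lower:
  assumes z: "z \<in> carrier_vec n" "z \<bullet> z = 1" and u: "u \<in> carrier_vec n" "z \<bullet> u = 0"
    and b: "\<forall>t. a * ((1 \<cdot>\<^sub>v z + t \<cdot>\<^sub>v u) \<bullet> (1 \<cdot>\<^sub>v z + t \<cdot>\<^sub>v u)) \<le> Q (1 \<cdot>\<^sub>v z + t \<cdot>\<^sub>v u) (1 \<cdot>\<^sub>v z + t \<cdot>\<^sub>v u)"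
    and a: "Q z z = a"
  shows "Q z u = 0"
proof (rule real_stat)
  show "\<forall>t. 0 \<le> 2 * t * Q z u + t\<^sup>2 * (Q u u - a * (u \<bullet> u))"
  proof
    fix t
    have "a * (1 + t^2 * (u \<bullet> u)) \<le> a + 2*t*Q z u + t^2 * Q u u"
      using b[rule_format, of t] unfolding Q_lin1[OF z(1) u(1)] z(2) u(2) a by simp
    thus "0 \<le> 2 * t * Q z u + t\<^sup>2 * (Q u u - a * (u \<bullet> u))" by (simp add: algebra_simps)
  qed
qed

lemma stat_upper:
  assumes z: "z \<in> carrier_vec n" "z \<bullet> z = 1" and u: "u \<in> carrier_vec n" "z \<bullet> u = 0"
    and b: "\<forall>t. Q (1 \<cdot>\<^sub>v z + t \<cdot>\<^sub>v u) (1 \<cdot>\<^sub>v z + t \<cdot>\<^sub>v u) \<le> a * ((1 \<cdot>\<^sub>v z + t \<cdot>\<^sub>v u) \<bullet> (1 \<cdot>\<^sub>v z + t \<cdot>\<^sub>v u))"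
    and a: "Q z z = a"
  shows "Q z u = 0"
proof -
  have "- Q z u = 0"
  proof (rule real_stat)
    show "\<forall>t. 0 \<le> 2 * t * (- Q z u) + t\<^sup>2 * (a * (u \<bullet> u) - Q u u)"
    proof
      fix t
      have "a + 2*t*Q z u + t^2 * Q u u \<le> a * (1 + t^2 * (u \<bullet> u))"
        using b[rule_format, of t] unfolding Q_lin1[OF z(1) u(1)] z(2) u(2) a by simp
      thus "0 \<le> 2 * t * (- Q z u) + t\<^sup>2 * (a * (u \<bullet> u) - Q u u)" by (simp add: algebra_simps)
    qed
  qed
  thus ?thesis by simp
qed

lemma eig_of_stat:
  assumes z: "z \<in> carrier_vec n" "z \<bullet> z = 1"
    and st: "\<And>u. u \<in> carrier_vec n \<Longrightarrow> z \<bullet> u = 0 \<Longrightarrow> P u \<Longrightarrow> Q z u = 0"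
    and Pr: "P (A *\<^sub>v z - Q z z \<cdot>\<^sub>v z)"
  shows "A *\<^sub>v z = Q z z \<cdot>\<^sub>v z"
proof -
  define r where "r = A *\<^sub>v z - Q z z \<cdot>\<^sub>v z"
  have r: "r \<in> carrier_vec n" unfolding r_def using A z by auto
  have Az: "A *\<^sub>v z \<in> carrier_vec n" using A z by auto
  have dA: "dim_row A = n" using A by simp
  have zr: "z \<bullet> r = 0"
  proof -
    have "z \<bullet> r = z \<bullet> (A *\<^sub>v z) - z \<bullet> (Q z z \<cdot>\<^sub>v z)" unfolding r_def
      by (rule scalar_prod_minus_distrib[OF z(1) Az]) (use z in auto)
    also have "\<dots> = 0"
    proof -
      have e1: "z \<bullet> (Q z z \<cdot>\<^sub>v z) = Q z z * (z \<bullet> z)" using scalar_prod_smult_right[of z z "Q z z"] by simp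
      have e2: "z \<bullet> (A *\<^sub>v z) = Q z z" unfolding Q_def ..
      show ?thesis using e1 e2 z(2) by simp
    qed
    finally show ?thesis .
  qed
  have "Q z r = 0" using st[OF r zr] Pr unfolding r_def by simp
  hence "Q r z = 0" using Qsym[OF z(1) r] by simp
  hence "r \<bullet> (A *\<^sub>v z) = 0" unfolding Q_def .
  moreover have "r \<bullet> z = 0" using zr comm_scalar_prod[OF r z(1)] by simp
  moreover have "A *\<^sub>v z = r + Q z z \<cdot>\<^sub>v z" unfolding r_def using Az z dA by (intro eq_vecI) auto
  ultimately have "r \<bullet> r = 0" using r z by (simp add: scalar_prod_add_distrib[of _ n])
  hence "r = 0\<^sub>v n" using dot_self_eq0[OF r] by simp
  thus ?thesis using \<open>A *\<^sub>v z = r + Q z z \<cdot>\<^sub>v z\<close> z by simp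
qed

end


lemma upper_kernel:
  fixes B :: "real mat"
  assumes B: "B \<in> carrier_mat n n" and ut: "upper_triangular B"
    and diag: "\<And>i. i < n - 1 \<Longrightarrow> B $$ (i,i) \<noteq> \<mu>"
    and w: "w \<in> carrier_vec n" and eig: "B *\<^sub>v w = \<mu> \<cdot>\<^sub>v w" and last: "w $ (n-1) = 0"
  shows "w = 0\<^sub>v n"
proof (rule ccontr)
  assume nz: "w \<noteq> 0\<^sub>v n"
  define S where "S = {i. i < n \<and> w $ i \<noteq> 0}"
  have S: "finite S" "S \<noteq> {}"
  proof -
    show "finite S" unfolding S_def by auto
    show "S \<noteq> {}"
    proof
      assume "S = {}"
      hence "w = 0\<^sub>v n" using w unfolding S_def by (intro eq_vecI) auto
      with nz show False by simp
    qed
  qed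
  define i0 where "i0 = Max S"
  have i0: "i0 \<in> S" unfolding i0_def using S by simp
  have i0n: "i0 < n" "w $ i0 \<noteq> 0" using i0 unfolding S_def by auto
  have above: "\<And>j. j < n \<Longrightarrow> i0 < j \<Longrightarrow> w $ j = 0"
  proof (rule ccontr)
    fix j assume j: "j < n" "i0 < j" "w $ j \<noteq> 0"
    hence "j \<in> S" unfolding S_def by auto
    hence "j \<le> i0" unfolding i0_def using S by simp
    with j show False by simp
  qed
  have i0ne: "i0 \<noteq> n - 1" using i0n last by auto
  hence i0lt: "i0 < n - 1" using i0n by simp
  have "(B *\<^sub>v w) $ i0 = (\<Sum>j<n. B $$ (i0, j) * w $ j)"
  proof -
    have "(B *\<^sub>v w) $ i0 = row B i0 \<bullet> w" using B i0n by (intro index_mult_mat_vec) auto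
    also have "\<dots> = (\<Sum>j<n. row B i0 $ j * w $ j)" using B w by (intro dot_sum) auto
    also have "\<dots> = (\<Sum>j<n. B $$ (i0, j) * w $ j)" using B i0n by (intro sum.cong) auto
    finally show ?thesis .
  qed
  also have "\<dots> = B $$ (i0, i0) * w $ i0 + (\<Sum>j\<in>{..<n} - {i0}. B $$ (i0, j) * w $ j)"
    using i0n by (subst sum.remove[of _ i0]) auto
  also have "(\<Sum>j\<in>{..<n} - {i0}. B $$ (i0, j) * w $ j) = 0"
  proof (rule sum.neutral, rule ballI)
    fix j assume j: "j \<in> {..<n} - {i0}"
    show "B $$ (i0, j) * w $ j = 0"
    proof (cases "j < i0")
      case True
      hence "B $$ (i0, j) = 0" using ut B i0n unfolding upper_triangular_def by auto
      thus ?thesis by simp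
    next
      case False
      hence "i0 < j" using j by auto
      hence "w $ j = 0" using above j by auto
      thus ?thesis by simp
    qed
  qed
  finally have "(B *\<^sub>v w) $ i0 = B $$ (i0, i0) * w $ i0" by simp
  moreover have "(B *\<^sub>v w) $ i0 = \<mu> * w $ i0" using eig w i0n by simp
  ultimately have "B $$ (i0, i0) = \<mu>" using i0n by simp
  with diag[OF i0lt] show False by simp
qed

lemma mat_vec_zero: "(P::real mat) \<in> carrier_mat n n \<Longrightarrow> P *\<^sub>v 0\<^sub>v n = 0\<^sub>v n"
  by (intro eq_vecI) auto

locale spec = symmat +
  fixes lam :: "nat \<Rightarrow> real"
  assumes n2: "n \<ge> 2"
    and eigs: "char_poly A = (\<Prod>i=1..n. [:- lam i, 1:])"
    and sorted: "\<And>i j. 1 \<le> i \<Longrightarrow> i \<le> j \<Longrightarrow> j \<le> n \<Longrightarrow> lam j \<le> lam i"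
    and gap: "lam n < lam (n - 1)"
begin

lemma dA: "dim_row A = n" "dim_col A = n" using A by auto

lemma eig_root: assumes z: "z \<in> carrier_vec n" "z \<noteq> 0\<^sub>v n" and e: "A *\<^sub>v z = e \<cdot>\<^sub>v z"
  shows "\<exists>i\<in>{1..n}. e = lam i"
proof -
  have "eigenvalue A e" unfolding eigenvalue_def eigenvector_def using z e dA by auto
  hence "poly (char_poly A) e = 0" using eigenvalue_root_char_poly[OF A] by simp
  hence "\<exists>i\<in>{1..n}. poly [:- lam i, 1:] e = 0" unfolding eigs by (subst (asm) poly_prod_0) auto
  thus ?thesis by auto
qed

lemma lam_eig: assumes i: "i \<in> {1..n}"
  shows "\<exists>z\<in>carrier_vec n. z \<bullet> z = 1 \<and> A *\<^sub>v z = lam i \<cdot>\<^sub>v z"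
proof -
  have "poly (char_poly A) (lam i) = 0" unfolding eigs using i by (subst poly_prod_0) auto
  hence "eigenvalue A (lam i)" using eigenvalue_root_char_poly[OF A] by simp
  then obtain v where v: "v \<in> carrier_vec n" "v \<noteq> 0\<^sub>v n" "A *\<^sub>v v = lam i \<cdot>\<^sub>v v"
    unfolding eigenvalue_def eigenvector_def using dA by auto
  have pos: "v \<bullet> v > 0" using v dot_self_eq0[OF v(1)] dot_self_nonneg[of v] by force
  define z where "z = (1 / sqrt (v \<bullet> v)) \<cdot>\<^sub>v v"
  have zc: "z \<in> carrier_vec n" unfolding z_def using v by simp
  have "z \<bullet> z = (1 / sqrt (v \<bullet> v))^2 * (v \<bullet> v)" unfolding z_def using v by (simp add: power2_eq_square)
  also have "\<dots> = 1" using pos by (simp add: power_divide)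
  finally have zz: "z \<bullet> z = 1" .
  have "A *\<^sub>v z = lam i \<cdot>\<^sub>v z" unfolding z_def using v A
    by (simp add: mult_mat_vec smult_smult_assoc mult.commute)
  thus ?thesis using zc zz by blast
qed

lemma simple_eig: assumes o: "orthonormal2 n v v2"
  and ev: "A *\<^sub>v v = lam n \<cdot>\<^sub>v v" and ev2: "A *\<^sub>v v2 = lam n \<cdot>\<^sub>v v2"
  shows False
proof -
  have v: "v \<in> carrier_vec n" and v2: "v2 \<in> carrier_vec n" and vv: "v \<bullet> v = 1" and vv2: "v2 \<bullet> v2 = 1"
    and vo: "v \<bullet> v2 = 0" using o unfolding orthonormal2_def by auto
  define es where "es = map lam [1..<Suc n]"
  have ch: "char_poly A = (\<Prod>e\<leftarrow>es. [:- e, 1:])"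
  proof -
    have "(\<Prod>e\<leftarrow>es. [:- e, 1:]) = prod_list (map (\<lambda>i. [:- lam i, 1:]) [1..<Suc n])"
      unfolding es_def by (simp add: o_def)
    also have "\<dots> = (\<Prod>i\<in>set [1..<Suc n]. [:- lam i, 1:])"
      by (rule prod.distinct_set_conv_list[symmetric]) simp
    also have "set [1..<Suc n] = {1..n}" by auto
    finally show ?thesis unfolding eigs by simp
  qed
  obtain B P W where sd: "schur_decomposition A es = (B, P, W)" by (cases "schur_decomposition A es") auto
  from schur_decomposition[OF A ch sd] have sim: "similar_mat_wit A B P W"
    and ut: "upper_triangular B" and dg: "diag_mat B = es" by auto
  note sw = similar_mat_witD2[OF A sim]
  have B: "B \<in> carrier_mat n n" and P: "P \<in> carrier_mat n n" and W: "W \<in> carrier_mat n n"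
    using sw by auto
  have Beig: "B *\<^sub>v (W *\<^sub>v x) = \<mu> \<cdot>\<^sub>v (W *\<^sub>v x)" if x: "x \<in> carrier_vec n" "A *\<^sub>v x = \<mu> \<cdot>\<^sub>v x" for x \<mu>
  proof -
    have e0: "A *\<^sub>v x = P *\<^sub>v (B *\<^sub>v (W *\<^sub>v x))"
    proof -
      have "A *\<^sub>v x = (P * B * W) *\<^sub>v x" using sw(3) by simp
      also have "\<dots> = (P * B) *\<^sub>v (W *\<^sub>v x)" using P B W x by (intro assoc_mult_mat_vec) auto
      also have "\<dots> = P *\<^sub>v (B *\<^sub>v (W *\<^sub>v x))" using P B W x by (intro assoc_mult_mat_vec) auto
      finally show ?thesis .
    qed
    have "W *\<^sub>v (A *\<^sub>v x) = W *\<^sub>v (P *\<^sub>v (B *\<^sub>v (W *\<^sub>v x)))" unfolding e0 ..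
    also have "\<dots> = (W * P) *\<^sub>v (B *\<^sub>v (W *\<^sub>v x))" using B P W x by simp
    also have "\<dots> = B *\<^sub>v (W *\<^sub>v x)" using sw(2) B W x by simp
    finally have "B *\<^sub>v (W *\<^sub>v x) = W *\<^sub>v (A *\<^sub>v x)" by simp
    also have "\<dots> = \<mu> \<cdot>\<^sub>v (W *\<^sub>v x)" using x W by (simp add: mult_mat_vec)
    finally show ?thesis .
  qed
  have Pinv: "P *\<^sub>v (W *\<^sub>v y) = y" if "y \<in> carrier_vec n" for y
  proof -
    have "P *\<^sub>v (W *\<^sub>v y) = (P * W) *\<^sub>v y" using P W that by simp
    thus ?thesis using sw(1) that by simp
  qed
  have diagB: "B $$ (i, i) = lam (Suc i)" if "i < n" for i
  proof -
    have "diag_mat B ! i = B $$ (i, i)" unfolding diag_mat_def using B that by simp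
    moreover have "es ! i = lam (Suc i)" unfolding es_def using that by (simp del: upt_Suc add: nth_upt)
    ultimately show ?thesis using dg by simp
  qed
  have diag: "B $$ (i, i) \<noteq> lam n" if "i < n - 1" for i
  proof -
    have "lam (n - 1) \<le> lam (Suc i)" using that n2 by (intro sorted) auto
    thus ?thesis using diagB[of i] that gap by simp
  qed
  have kern: "x = 0\<^sub>v n" if x: "x \<in> carrier_vec n" "A *\<^sub>v x = lam n \<cdot>\<^sub>v x" "(W *\<^sub>v x) $ (n-1) = 0" for x
  proof -
    have "W *\<^sub>v x = 0\<^sub>v n" using W x by (intro upper_kernel[OF B ut diag _ Beig]) auto
    hence "P *\<^sub>v (W *\<^sub>v x) = 0\<^sub>v n" using mat_vec_zero[OF P] by simp
    thus ?thesis using Pinv[OF x(1)] by simp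
  qed
  define a where "a = (W *\<^sub>v v) $ (n-1)"
  define b where "b = (W *\<^sub>v v2) $ (n-1)"
  define y where "y = b \<cdot>\<^sub>v v + (- a) \<cdot>\<^sub>v v2"
  have y: "y \<in> carrier_vec n" unfolding y_def using v v2 by simp
  have Ay: "A *\<^sub>v y = lam n \<cdot>\<^sub>v y"
  proof -
    have "A *\<^sub>v y = b \<cdot>\<^sub>v (A *\<^sub>v v) + (- a) \<cdot>\<^sub>v (A *\<^sub>v v2)"
      unfolding y_def using A v v2 by (simp add: mult_add_distrib_mat_vec mult_mat_vec)
    also have "\<dots> = lam n \<cdot>\<^sub>v y" unfolding ev ev2 y_def using v v2
      by (intro eq_vecI) (auto simp: algebra_simps)
    finally show ?thesis .
  qed
  have "(W *\<^sub>v y) $ (n-1) = 0"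
  proof -
    have "W *\<^sub>v y = b \<cdot>\<^sub>v (W *\<^sub>v v) + (- a) \<cdot>\<^sub>v (W *\<^sub>v v2)"
      unfolding y_def using W v v2 by (simp add: mult_add_distrib_mat_vec mult_mat_vec)
    thus ?thesis using W v v2 n2 unfolding a_def b_def by simp
  qed
  hence "y = 0\<^sub>v n" using kern[OF y Ay] by simp
  hence "y \<bullet> v2 = 0" using v2 by simp
  moreover have "y \<bullet> v2 = - a" unfolding y_def lin_dot[OF v v2, of b "-a" 0 1, simplified]
    using v v2 vv2 vo by (simp add: add_scalar_prod_distrib[of _ n])
  ultimately have a0: "a = 0" by simp
  have "v = 0\<^sub>v n" using kern[OF v ev] a0 unfolding a_def by simp
  hence "v \<bullet> v = 0" by simp
  with vv show False by simp
qed

end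


context spec
begin

lemma sphere_ne: "unit_vec n 0 \<in> unit_sphere n"
proof -
  have "unit_vec n 0 \<bullet> unit_vec n 0 = (unit_vec n 0 :: real vec) $ 0"
    using n2 by (intro scalar_prod_left_unit) auto
  thus ?thesis unfolding unit_sphere_def using n2 by simp
qed

lemma cont_Q: "continuous_on UNIV (\<lambda>x::nat\<Rightarrow>real. c * Q (vec n x) (vec n x))"
  unfolding Q_def by (rule cont_quad[OF A])

lemma lin1_carrier: "z \<in> carrier_vec n \<Longrightarrow> u \<in> carrier_vec n \<Longrightarrow> 1 \<cdot>\<^sub>v z + t \<cdot>\<^sub>v u \<in> carrier_vec n"
  by simp

lemma unit_ne0: "z \<in> unit_sphere n \<Longrightarrow> z \<noteq> 0\<^sub>v n"
  unfolding unit_sphere_def by auto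

lemma spectral:
  "\<exists>v. v \<in> carrier_vec n \<and> v \<bullet> v = 1 \<and> A *\<^sub>v v = lam n \<cdot>\<^sub>v v
     \<and> (\<forall>y\<in>carrier_vec n. v \<bullet> y = 0 \<longrightarrow> lam (n - 1) * (y \<bullet> y) \<le> Q y y)
     \<and> (\<forall>y\<in>carrier_vec n. Q y y \<le> lam 1 * (y \<bullet> y))"
proof -
  have cl: "closed {x::nat\<Rightarrow>real. True}" by simp
  have c1: "continuous_on UNIV (\<lambda>x::nat\<Rightarrow>real. Q (vec n x) (vec n x))" using cont_Q[of 1] by simp
  from exists_min_sphere[of "\<lambda>z. Q z z" n "\<lambda>_. True", OF c1 _] sphere_ne
  obtain v where v: "v \<in> unit_sphere n" and vmin: "\<forall>w\<in>unit_sphere n. Q v v \<le> Q w w" by auto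
  have vc: "v \<in> carrier_vec n" "v \<bullet> v = 1" using v unfolding unit_sphere_def by auto
  have low1: "Q v v * (y \<bullet> y) \<le> Q y y" if "y \<in> carrier_vec n" for y
    using hom_bound(1)[of "\<lambda>_. True", OF _ that] vmin by auto
  have st1: "Q v u = 0" if "u \<in> carrier_vec n" "v \<bullet> u = 0" "True" for u
    by (rule stat_lower[OF vc that(1,2) _ refl]) (use low1 lin1_carrier[OF vc(1) that(1)] in auto)
  have ev1: "A *\<^sub>v v = Q v v \<cdot>\<^sub>v v" by (rule eig_of_stat[OF vc st1]) auto
  obtain i where i: "i \<in> {1..n}" "Q v v = lam i" using eig_root[OF vc(1) unit_ne0[OF v] ev1] by blast
  have "lam n \<le> Q v v" using i sorted[of i n] by auto
  moreover have "Q v v \<le> lam n"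
  proof -
    obtain z where z: "z \<in> carrier_vec n" "z \<bullet> z = 1" "A *\<^sub>v z = lam n \<cdot>\<^sub>v z"
      using lam_eig[of n] n2 by auto
    have "Q z z = lam n" unfolding Q_def z(3) using z by simp
    moreover have "z \<in> unit_sphere n" using z unfolding unit_sphere_def by simp
    ultimately show ?thesis using vmin by force
  qed
  ultimately have vm: "Q v v = lam n" by simp
  have evv: "A *\<^sub>v v = lam n \<cdot>\<^sub>v v" using ev1 vm by simp
  have c2: "continuous_on UNIV (\<lambda>x::nat\<Rightarrow>real. - Q (vec n x) (vec n x))" using cont_Q[of "-1"] by simp
  from exists_min_sphere[of "\<lambda>z. - Q z z" n "\<lambda>_. True", OF c2 _] sphere_ne
  obtain vM where vM: "vM \<in> unit_sphere n" and vMmax: "\<forall>w\<in>unit_sphere n. Q w w \<le> Q vM vM" by auto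
  have vMc: "vM \<in> carrier_vec n" "vM \<bullet> vM = 1" using vM unfolding unit_sphere_def by auto
  have up: "Q y y \<le> Q vM vM * (y \<bullet> y)" if "y \<in> carrier_vec n" for y
    using hom_bound(2)[of "\<lambda>_. True", OF _ that] vMmax by auto
  have st2: "Q vM u = 0" if "u \<in> carrier_vec n" "vM \<bullet> u = 0" "True" for u
    by (rule stat_upper[OF vMc that(1,2) _ refl]) (use up lin1_carrier[OF vMc(1) that(1)] in auto)
  have ev2: "A *\<^sub>v vM = Q vM vM \<cdot>\<^sub>v vM" by (rule eig_of_stat[OF vMc st2]) auto
  obtain j where j: "j \<in> {1..n}" "Q vM vM = lam j" using eig_root[OF vMc(1) unit_ne0[OF vM] ev2] by blast
  have "Q vM vM \<le> lam 1" using j sorted[of 1 j] by auto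
  hence upper: "Q y y \<le> lam 1 * (y \<bullet> y)" if "y \<in> carrier_vec n" for y
    using up[OF that] mult_right_mono[OF _ dot_self_nonneg[of y], of "Q vM vM" "lam 1"] by linarith
  have c3: "closed {x::nat\<Rightarrow>real. v \<bullet> vec n x = 0}" by (rule closed_orth[OF vc(1)])
  have ne3: "\<exists>z\<in>unit_sphere n. v \<bullet> z = 0"
  proof -
    have nm1: "n - 1 \<in> {1..n}" using n2 by auto
    obtain z where z: "z \<in> carrier_vec n" "z \<bullet> z = 1" "A *\<^sub>v z = lam (n-1) \<cdot>\<^sub>v z"
      using lam_eig[OF nm1] by auto
    have q1: "Q v z = lam (n-1) * (v \<bullet> z)" unfolding Q_def z(3) using z vc by simp
    have zv: "z \<bullet> v = v \<bullet> z" using comm_scalar_prod[OF z(1) vc(1)] .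
    have q2: "Q z v = lam n * (v \<bullet> z)" unfolding Q_def evv using z vc zv by simp
    have e: "lam (n-1) * (v \<bullet> z) = lam n * (v \<bullet> z)" using q1 q2 Qsym[OF vc(1) z(1)] by linarith
    hence "v \<bullet> z = 0" using gap by (metis mult_right_cancel order_less_irrefl)
    thus ?thesis using z unfolding unit_sphere_def by auto
  qed
  from exists_min_sphere[of "\<lambda>z. Q z z" n "\<lambda>z. v \<bullet> z = 0", OF c1 c3 ne3]
  obtain v2 where v2: "v2 \<in> unit_sphere n" "v \<bullet> v2 = 0"
    and v2min: "\<forall>w\<in>unit_sphere n. v \<bullet> w = 0 \<longrightarrow> Q v2 v2 \<le> Q w w" by auto
  have v2c: "v2 \<in> carrier_vec n" "v2 \<bullet> v2 = 1" using v2 unfolding unit_sphere_def by auto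
  have Pscale: "v \<bullet> (c \<cdot>\<^sub>v y) = 0" if "v \<bullet> y = 0" for y c
    using that by (simp add: scalar_prod_def sum_distrib_left[symmetric] algebra_simps)
  have low2: "Q v2 v2 * (y \<bullet> y) \<le> Q y y" if "y \<in> carrier_vec n" "v \<bullet> y = 0" for y
    using hom_bound(1)[of "\<lambda>y. v \<bullet> y = 0", OF Pscale that] v2min by auto
  have st3: "Q v2 u = 0" if "u \<in> carrier_vec n" "v2 \<bullet> u = 0" "v \<bullet> u = 0" for u
  proof (rule stat_lower[OF v2c that(1,2) _ refl], rule allI)
    fix t
    have "v \<bullet> (1 \<cdot>\<^sub>v v2 + t \<cdot>\<^sub>v u) = 0"
      using vc v2c that v2 by (simp add: scalar_prod_add_distrib[of _ n])
    thus "Q v2 v2 * ((1 \<cdot>\<^sub>v v2 + t \<cdot>\<^sub>v u) \<bullet> (1 \<cdot>\<^sub>v v2 + t \<cdot>\<^sub>v u)) \<le> Q (1 \<cdot>\<^sub>v v2 + t \<cdot>\<^sub>v u) (1 \<cdot>\<^sub>v v2 + t \<cdot>\<^sub>v u)"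
      by (rule low2[OF lin1_carrier[OF v2c(1) that(1)]])
  qed
  have Pr: "v \<bullet> (A *\<^sub>v v2 - Q v2 v2 \<cdot>\<^sub>v v2) = 0"
  proof -
    have Av2: "A *\<^sub>v v2 \<in> carrier_vec n" using A v2c by simp
    have "v \<bullet> (A *\<^sub>v v2) = Q v v2" unfolding Q_def ..
    also have "\<dots> = Q v2 v" using Qsym[OF vc(1) v2c(1)] .
    also have "\<dots> = lam n * (v2 \<bullet> v)" unfolding Q_def evv using v2c vc by simp
    also have "v2 \<bullet> v = 0" using comm_scalar_prod[OF v2c(1) vc(1)] v2(2) by simp
    finally have e1: "v \<bullet> (A *\<^sub>v v2) = 0" by simp
    have "v \<bullet> (A *\<^sub>v v2 - Q v2 v2 \<cdot>\<^sub>v v2) = v \<bullet> (A *\<^sub>v v2) - v \<bullet> (Q v2 v2 \<cdot>\<^sub>v v2)"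
      by (rule scalar_prod_minus_distrib[OF vc(1) Av2]) (use v2c in auto)
    thus ?thesis using e1 v2 vc v2c by (simp add: scalar_prod_smult_right)
  qed
  have ev3: "A *\<^sub>v v2 = Q v2 v2 \<cdot>\<^sub>v v2" by (rule eig_of_stat[where P="\<lambda>u. v \<bullet> u = 0", OF v2c st3 Pr])
  obtain k where k: "k \<in> {1..n}" "Q v2 v2 = lam k" using eig_root[OF v2c(1) unit_ne0[OF v2(1)] ev3] by blast
  have "lam k \<noteq> lam n"
  proof
    assume "lam k = lam n"
    hence "A *\<^sub>v v2 = lam n \<cdot>\<^sub>v v2" using ev3 k by simp
    moreover have "orthonormal2 n v v2" unfolding orthonormal2_def using vc v2c v2 by auto
    ultimately show False using simple_eig[OF _ evv] by blast
  qed
  hence "k \<noteq> n" by auto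
  hence "k \<le> n - 1" using k by auto
  hence "lam (n-1) \<le> Q v2 v2" using k sorted[of k "n-1"] by auto
  hence second: "lam (n-1) * (y \<bullet> y) \<le> Q y y" if "y \<in> carrier_vec n" "v \<bullet> y = 0" for y
    using low2[OF that] mult_right_mono[OF _ dot_self_nonneg[of y], of "lam (n-1)" "Q v2 v2"] by linarith
  show ?thesis using vc evv second upper by blast
qed

end


lemma cap_arith0:
  fixes d \<beta> s t :: real
  assumes d: "d > 0" and bp: "\<beta> > 0" and b1: "16 * \<beta> \<le> 3 * d"
    and st: "s + t = 1" and s0: "s \<ge> 0" and t0: "t \<ge> 0" and e1: "s * t * d^2 \<le> \<beta>^2"
    and h2: "s \<ge> t \<Longrightarrow> (s - t) * d \<le> 3 * \<beta>"
  shows "d^2 * s \<le> 2 * \<beta>^2"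
proof (cases "s \<ge> 1/2")
  case True
  have ts: "t \<le> s" using True st by linarith
  have e: "s - t = 1 - 2 * t" using st by linarith
  have "(1 - 2 * t) * d \<le> 3 * \<beta>" using h2[OF ts] unfolding e .
  hence "d - 2 * (t * d) \<le> 3 * \<beta>" by (simp add: algebra_simps)
  hence "7 * d \<le> 32 * (t * d)" using b1 by linarith
  hence "(7/32) * d \<le> t * d" by linarith
  hence t7: "7/32 \<le> t" using d by (simp only: mult_le_cancel_right_pos)
  have "1/2 * (7/32) \<le> s * t" using True t7 by (intro mult_mono) auto
  hence "1/2 * (7/32) * d^2 \<le> s * t * d^2" by (intro mult_right_mono) auto
  hence "7 * d^2 \<le> 64 * \<beta>^2" using e1 by linarith
  moreover have "\<beta>^2 \<le> (3 * d / 16)^2" using b1 bp by (intro power_mono) auto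
  hence "\<beta>^2 \<le> 9 * d^2 / 256" by (simp add: power_divide power_mult_distrib)
  moreover have "d^2 > 0" using d by simp
  ultimately have False using \<open>7 * d^2 \<le> 64 * \<beta>^2\<close> by linarith
  thus ?thesis ..
next
  case False
  hence "t \<ge> 1/2" using st by linarith
  hence "s * (1/2) * d^2 \<le> s * t * d^2" using s0 by (intro mult_right_mono mult_left_mono) auto
  moreover have "s * (1/2) * d^2 = (d^2 * s) / 2" by simp
  ultimately show ?thesis using e1 by linarith
qed

locale main = spec +
  fixes \<beta> :: real and v :: "real vec"
  assumes vc: "v \<in> carrier_vec n" and vv: "v \<bullet> v = 1" and ev: "A *\<^sub>v v = lam n \<cdot>\<^sub>v v"
    and second: "\<And>y. y \<in> carrier_vec n \<Longrightarrow> v \<bullet> y = 0 \<Longrightarrow> lam (n-1) * (y \<bullet> y) \<le> Q y y"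
    and upper: "\<And>y. y \<in> carrier_vec n \<Longrightarrow> Q y y \<le> lam 1 * (y \<bullet> y)"
    and bpos: "\<beta> > 0"
    and b1: "16 * \<beta> \<le> 3 * (lam (n-1) - lam n)"
    and b2: "2 * \<beta>^2 * ((lam (n-1) - lam n) + (lam 1 - lam n)) + 2 * \<beta> * (lam (n-1) - lam n)^2 < (lam (n-1) - lam n)^3"
begin

lemma Qvv: "Q v v = lam n" unfolding Q_def ev using vc vv by simp

lemma Qv0: "y \<in> carrier_vec n \<Longrightarrow> v \<bullet> y = 0 \<Longrightarrow> Q v y = 0"
proof -
  assume y: "y \<in> carrier_vec n" and o: "v \<bullet> y = 0"
  have "Q v y = Q y v" using Qsym[OF vc y] .
  also have "\<dots> = lam n * (y \<bullet> v)" unfolding Q_def ev using y vc by simp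
  also have "y \<bullet> v = 0" using comm_scalar_prod[OF y vc] o by simp
  finally show ?thesis by simp
qed

lemma decomp: assumes x: "x \<in> carrier_vec n"
  shows "v \<bullet> (1 \<cdot>\<^sub>v x + (- (v \<bullet> x)) \<cdot>\<^sub>v v) = 0"
    "(1 \<cdot>\<^sub>v x + (- (v \<bullet> x)) \<cdot>\<^sub>v v) \<bullet> (1 \<cdot>\<^sub>v x + (- (v \<bullet> x)) \<cdot>\<^sub>v v) = x \<bullet> x - (v \<bullet> x)^2"
    "Q x x = (v \<bullet> x)^2 * lam n + Q (1 \<cdot>\<^sub>v x + (- (v \<bullet> x)) \<cdot>\<^sub>v v) (1 \<cdot>\<^sub>v x + (- (v \<bullet> x)) \<cdot>\<^sub>v v)"
proof -
  define c where "c = v \<bullet> x"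
  define y where "y = 1 \<cdot>\<^sub>v x + (- c) \<cdot>\<^sub>v v"
  have y: "y \<in> carrier_vec n" unfolding y_def using x vc by simp
  have xv: "x \<bullet> v = c" using comm_scalar_prod[OF x vc] c_def by simp
  show vy: "v \<bullet> (1 \<cdot>\<^sub>v x + (- (v \<bullet> x)) \<cdot>\<^sub>v v) = 0"
    using x vc vv by (simp add: scalar_prod_add_distrib[of _ n])
  show "(1 \<cdot>\<^sub>v x + (- (v \<bullet> x)) \<cdot>\<^sub>v v) \<bullet> (1 \<cdot>\<^sub>v x + (- (v \<bullet> x)) \<cdot>\<^sub>v v) = x \<bullet> x - (v \<bullet> x)^2"
    unfolding lin_dot[OF x vc] xv[unfolded c_def] vv by (simp add: power2_eq_square)
  have xe: "x = c \<cdot>\<^sub>v v + 1 \<cdot>\<^sub>v y" unfolding y_def using x vc by (intro eq_vecI) auto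
  have "Q x x = c * c * Q v v + (c * 1 + 1 * c) * Q v y + 1 * 1 * Q y y"
    by (subst (1 2) xe) (unfold Q_def, rule lin_Q[OF A Asym vc y])
  also have "Q v y = 0" using Qv0[OF y] vy y_def c_def by simp
  finally show "Q x x = (v \<bullet> x)^2 * lam n + Q (1 \<cdot>\<^sub>v x + (- (v \<bullet> x)) \<cdot>\<^sub>v v) (1 \<cdot>\<^sub>v x + (- (v \<bullet> x)) \<cdot>\<^sub>v v)"
    unfolding Qvv y_def c_def by (simp add: power2_eq_square)
qed

lemma G1: assumes x: "x \<in> carrier_vec n" "x \<bullet> x = 1"
  shows "lam n + (lam (n-1) - lam n) * (1 - (v \<bullet> x)^2) \<le> Q x x"
proof -
  let ?y = "1 \<cdot>\<^sub>v x + (- (v \<bullet> x)) \<cdot>\<^sub>v v"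
  have "lam (n-1) * (?y \<bullet> ?y) \<le> Q ?y ?y" using second[OF _ decomp(1)[OF x(1)]] x vc by simp
  hence "lam (n-1) * (1 - (v \<bullet> x)^2) \<le> Q ?y ?y" using decomp(2)[OF x(1)] x by simp
  moreover have "Q x x = (v \<bullet> x)^2 * lam n + Q ?y ?y" by (rule decomp(3)[OF x(1)])
  ultimately show ?thesis by (simp add: algebra_simps)
qed

lemma G2: assumes x: "x \<in> carrier_vec n" "x \<bullet> x = 1"
  shows "Q x x \<le> lam n + (lam 1 - lam n) * (1 - (v \<bullet> x)^2)" "(v \<bullet> x)^2 \<le> 1"
proof -
  let ?y = "1 \<cdot>\<^sub>v x + (- (v \<bullet> x)) \<cdot>\<^sub>v v"
  have "Q ?y ?y \<le> lam 1 * (?y \<bullet> ?y)" using upper x vc by simp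
  hence "Q ?y ?y \<le> lam 1 * (1 - (v \<bullet> x)^2)" using decomp(2)[OF x(1)] x by simp
  moreover have "Q x x = (v \<bullet> x)^2 * lam n + Q ?y ?y" by (rule decomp(3)[OF x(1)])
  ultimately show "Q x x \<le> lam n + (lam 1 - lam n) * (1 - (v \<bullet> x)^2)" by (simp add: algebra_simps)
  have "0 \<le> ?y \<bullet> ?y" by (rule dot_self_nonneg)
  thus "(v \<bullet> x)^2 \<le> 1" using decomp(2)[OF x(1)] x by simp
qed

lemma d_pos: "lam (n-1) - lam n > 0" using gap by simp

lemma cap: assumes lm: "local_minimizer_on (obj A \<beta>) (unit_sphere n) z"
  shows "(lam (n-1) - lam n)^2 * (1 - (v \<bullet> z)^2) \<le> 2 * \<beta>^2"
proof -
  define d where "d = lam (n-1) - lam n"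
  have d: "d > 0" unfolding d_def using d_pos .
  from lm have zs: "z \<in> unit_sphere n" and "\<exists>\<epsilon>>0. \<forall>w\<in>unit_sphere n. vdist w z < \<epsilon> \<longrightarrow> obj A \<beta> z \<le> obj A \<beta> w"
    unfolding local_minimizer_on_def by auto
  then obtain \<epsilon> where \<epsilon>: "\<epsilon> > 0" and h\<epsilon>: "\<forall>w\<in>unit_sphere n. vdist w z < \<epsilon> \<longrightarrow> obj A \<beta> z \<le> obj A \<beta> w" by blast
  have z: "z \<in> carrier_vec n" "z \<bullet> z = 1" using zs unfolding unit_sphere_def by auto
  define c0 where "c0 = v \<bullet> z"
  define y where "y = 1 \<cdot>\<^sub>v z + (- c0) \<cdot>\<^sub>v v"
  have y: "y \<in> carrier_vec n" unfolding y_def using z vc by simp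
  have vy: "v \<bullet> y = 0" unfolding y_def c0_def by (rule decomp(1)[OF z(1)])
  have yy: "y \<bullet> y = 1 - c0^2" unfolding y_def c0_def using decomp(2)[OF z(1)] z by simp
  have c01: "c0^2 \<le> 1" unfolding c0_def by (rule G2(2)[OF z])
  show ?thesis
  proof (cases "y \<bullet> y = 0")
    case True
    hence "1 - (v \<bullet> z)^2 = 0" using yy c0_def by simp
    thus ?thesis by simp
  next
    case False
    hence spos: "y \<bullet> y > 0" using dot_self_nonneg[of y] by simp
    define b where "b = sqrt (y \<bullet> y)"
    have b: "b > 0" "b^2 = 1 - c0^2" unfolding b_def using spos yy by auto
    define yh where "yh = (1 / b) \<cdot>\<^sub>v y"
    have yhc: "yh \<in> carrier_vec n" unfolding yh_def using y by simp
    have "yh \<bullet> yh = (1/b)^2 * (y \<bullet> y)" unfolding yh_def using y by (simp add: power2_eq_square)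
    also have "\<dots> = 1" using b spos unfolding b_def by (simp add: power_divide)
    finally have yhyh: "yh \<bullet> yh = 1" .
    have vyh: "v \<bullet> yh = 0" unfolding yh_def using vy y vc by simp
    have orth: "orthonormal2 n v yh" unfolding orthonormal2_def using vc yhc vv yhyh vyh by simp
    have cb: "-1 \<le> c0" "c0 \<le> 1" using c01 by (auto simp: abs_le_iff[symmetric] abs_square_le_1)
    define t0 where "t0 = arccos c0"
    have ct: "cos t0 = c0" unfolding t0_def using cb by (simp add: cos_arccos)
    have st: "sin t0 = b" unfolding t0_def b_def using cb yy by (simp add: sin_arccos)
    have crv0: "crv v yh t0 = z"
    proof (rule eq_vecI)
      show "dim_vec (crv v yh t0) = dim_vec z" using vc yhc z by simp
      fix i assume "i < dim_vec z"
      hence i: "i < n" using z by simp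
      have "crv v yh t0 $ i = cos t0 * v $ i + sin t0 * yh $ i" by (rule crv_index[OF vc yhc i])
      also have "\<dots> = c0 * v $ i + b * ((1/b) * (z $ i + (- c0) * v $ i))"
        unfolding ct st yh_def y_def using i vc z by simp
      also have "\<dots> = z $ i" using b by (simp add: algebra_simps)
      finally show "crv v yh t0 $ i = z $ i" .
    qed
    define g where "g t = obj A \<beta> (crv v yh t)" for t
    have loc: "\<forall>t. \<bar>t - t0\<bar> < \<epsilon> \<longrightarrow> g t0 \<le> g t"
    proof (intro allI impI)
      fix t assume t: "\<bar>t - t0\<bar> < \<epsilon>"
      have "vdist (crv v yh t) z \<le> \<bar>t - t0\<bar>" using crv_dist[OF orth, of t t0] crv0 by simp
      hence "vdist (crv v yh t) z < \<epsilon>" using t by simp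
      thus "g t0 \<le> g t" unfolding g_def crv0 using h\<epsilon> crv_sphere[OF orth] by blast
    qed
    have gd: "(g has_real_derivative D1 \<beta> v yh t) (at t)" for t
      unfolding g_def by (rule G_deriv[OF vc yhc])
    have g1d: "((\<lambda>t. D1 \<beta> v yh t) has_real_derivative D2 \<beta> v yh t) (at t)" for t
      by (rule D1_deriv[OF vc yhc])
    from second_order[OF gd g1d \<epsilon> loc]
    have D1z: "D1 \<beta> v yh t0 = 0" and D2p: "D2 \<beta> v yh t0 \<ge> 0" by auto
    define K where "K = Q yh yh - lam n"
    have K: "K \<ge> d" using second[OF yhc vyh] yhyh unfolding K_def d_def by simp
    have Qvyh: "Q v yh = 0" by (rule Qv0[OF yhc vyh])
    let ?P = "crv v yh t0" and ?P' = "dcrv v yh t0"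
    have oP: "orthonormal2 n ?P ?P'" by (rule crv_orth(4)[OF orth])
    note ob = orth_bounds[OF oP]
    have QP'P: "Q ?P' ?P = b * c0 * K"
      unfolding crv_def dcrv_def Q_def lin_Q[OF A Asym vc yhc]
      unfolding Q_def[symmetric] Qvv Qvyh ct st K_def by (simp add: algebra_simps)
    have QPP: "Q ?P' ?P' - Q ?P ?P = (c0^2 - b^2) * K"
      unfolding crv_def dcrv_def Q_def lin_Q[OF A Asym vc yhc]
      unfolding Q_def[symmetric] Qvv Qvyh ct st K_def by (simp add: algebra_simps power2_eq_square)
    have h1: "\<bar>b * c0\<bar> * K \<le> \<beta>"
    proof -
      have "b * c0 * K = - 2 * \<beta> * (\<Sum>k<n. (?P $ k)^3 * (?P' $ k))"
        using D1z unfolding D1_def QP'P by simp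
      hence "\<bar>b * c0 * K\<bar> = 2 * \<beta> * \<bar>\<Sum>k<n. (?P $ k)^3 * (?P' $ k)\<bar>" using bpos by (simp add: abs_mult)
      also have "\<dots> \<le> 2 * \<beta> * (1/2)" using ob(2) bpos by (intro mult_left_mono) auto
      finally show ?thesis using K d by (simp add: abs_mult)
    qed
    have h2: "(b^2 - c0^2) * K \<le> 3 * \<beta>"
    proof -
      define SS where "SS = (\<Sum>k<n. 3 * (?P $ k)^2 * (?P' $ k)^2 - (?P $ k)^4)"
      have "0 \<le> (c0^2 - b^2) * K + 2 * \<beta> * SS"
        using D2p unfolding D2_def QPP SS_def by simp
      moreover have "SS = 3 * (\<Sum>k<n. (?P $ k)^2 * (?P' $ k)^2) - (\<Sum>k<n. (?P $ k)^4)"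
        unfolding SS_def by (simp add: sum_subtractf sum_distrib_left mult.assoc)
      hence "SS \<le> 3/2" using ob(4,5) by linarith
      hence "2 * \<beta> * SS \<le> 2 * \<beta> * (3/2)" using bpos by (intro mult_left_mono) auto
      moreover have "(b^2 - c0^2) * K = - ((c0^2 - b^2) * K)" by (simp add: algebra_simps)
      ultimately show ?thesis by linarith
    qed
    have e1: "b^2 * c0^2 * d^2 \<le> \<beta>^2"
    proof -
      have "\<bar>b * c0\<bar> * d \<le> \<bar>b * c0\<bar> * K" using K by (intro mult_left_mono) auto
      hence "\<bar>b * c0\<bar> * d \<le> \<beta>" using h1 by linarith
      hence "(\<bar>b * c0\<bar> * d)^2 \<le> \<beta>^2" using d by (intro power_mono) auto
      thus ?thesis by (simp add: power_mult_distrib)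
    qed
    have h2': "b^2 \<ge> c0^2 \<Longrightarrow> (b^2 - c0^2) * d \<le> 3 * \<beta>"
    proof -
      assume "b^2 \<ge> c0^2"
      hence "(b^2 - c0^2) * d \<le> (b^2 - c0^2) * K" using K by (intro mult_left_mono) auto
      thus ?thesis using h2 by linarith
    qed
    have "d^2 * b^2 \<le> 2 * \<beta>^2"
      by (rule cap_arith0[OF d bpos b1[folded d_def] _ _ _ e1 h2']) (use b c01 in auto)
    thus ?thesis using b unfolding d_def c0_def by simp
  qed
qed

end


lemma cos_abs_real: "cos \<bar>y::real\<bar> = cos y" by (simp add: abs_if)

lemma sin_sum_ge: assumes L: "0 < L" "L < pi" and x: "0 \<le> x" "x \<le> L"
  shows "sin L \<le> sin (L - x) + sin x"
proof -
  have e1: "sin (L - x) + sin x = 2 * sin (L/2) * cos ((L - 2*x)/2)"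
    using sin_plus_sin[of "L - x" x] by (simp add: algebra_simps)
  have e2: "sin L = 2 * sin (L/2) * cos (L/2)"
    using sin_double[of "L/2"] by simp
  have s: "sin (L/2) > 0" using L by (intro sin_gt_zero) auto
  have "cos (L/2) \<le> cos \<bar>(L - 2*x)/2\<bar>"
    using L x by (subst cos_mono_le_eq) auto
  hence "cos (L/2) \<le> cos ((L - 2*x)/2)" unfolding cos_abs_real .
  hence "2 * sin (L/2) * cos (L/2) \<le> 2 * sin (L/2) * cos ((L - 2*x)/2)" using s by simp
  thus ?thesis using e1 e2 by simp
qed

context main
begin

lemma unique:
  assumes lm1: "local_minimizer_on (obj A \<beta>) (unit_sphere n) z1"
    and lm2: "local_minimizer_on (obj A \<beta>) (unit_sphere n) z2"
    and p1: "v \<bullet> z1 > 0" and p2: "v \<bullet> z2 > 0"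
  shows "z1 = z2"
proof (rule ccontr)
  assume ne: "z1 \<noteq> z2"
  define d where "d = lam (n-1) - lam n"
  define r where "r = lam 1 - lam n"
  have d: "d > 0" unfolding d_def using d_pos .
  have r: "r \<ge> 0" unfolding r_def using sorted[of 1 n] n2 by auto
  have cap1: "d^2 * (1 - (v \<bullet> z1)^2) \<le> 2 * \<beta>^2" unfolding d_def by (rule cap[OF lm1])
  have cap2: "d^2 * (1 - (v \<bullet> z2)^2) \<le> 2 * \<beta>^2" unfolding d_def by (rule cap[OF lm2])
  from lm1 have z1s: "z1 \<in> unit_sphere n" and "\<exists>\<epsilon>>0. \<forall>w\<in>unit_sphere n. vdist w z1 < \<epsilon> \<longrightarrow> obj A \<beta> z1 \<le> obj A \<beta> w"
    unfolding local_minimizer_on_def by auto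
  then obtain \<epsilon>1 where \<epsilon>1: "\<epsilon>1 > 0" and h1: "\<forall>w\<in>unit_sphere n. vdist w z1 < \<epsilon>1 \<longrightarrow> obj A \<beta> z1 \<le> obj A \<beta> w" by blast
  from lm2 have z2s: "z2 \<in> unit_sphere n" and "\<exists>\<epsilon>>0. \<forall>w\<in>unit_sphere n. vdist w z2 < \<epsilon> \<longrightarrow> obj A \<beta> z2 \<le> obj A \<beta> w"
    unfolding local_minimizer_on_def by auto
  then obtain \<epsilon>2 where \<epsilon>2: "\<epsilon>2 > 0" and h2: "\<forall>w\<in>unit_sphere n. vdist w z2 < \<epsilon>2 \<longrightarrow> obj A \<beta> z2 \<le> obj A \<beta> w" by blast
  have z1: "z1 \<in> carrier_vec n" "z1 \<bullet> z1 = 1" using z1s unfolding unit_sphere_def by auto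
  have z2: "z2 \<in> carrier_vec n" "z2 \<bullet> z2 = 1" using z2s unfolding unit_sphere_def by auto
  define k where "k = z1 \<bullet> z2"
  have z21: "z2 \<bullet> z1 = k" unfolding k_def by (rule comm_scalar_prod[OF z2(1) z1(1)])
  have k1: "k < 1"
  proof -
    let ?w = "1 \<cdot>\<^sub>v z1 + (-1) \<cdot>\<^sub>v z2"
    have "?w \<bullet> ?w = 2 - 2 * k" unfolding lin_dot[OF z1(1) z2(1)] z1 z2 k_def by simp
    moreover have "?w \<bullet> ?w \<noteq> 0"
    proof
      assume "?w \<bullet> ?w = 0"
      hence "?w = 0\<^sub>v n" using dot_self_eq0[of ?w n] z1 z2 by simp
      have "z1 = z2"
      proof (rule eq_vecI)
        show "dim_vec z1 = dim_vec z2" using z1 z2 by simp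
        fix i assume "i < dim_vec z2"
        hence i: "i < n" using z2 by simp
        have "?w $ i = 0" using \<open>?w = 0\<^sub>v n\<close> i by simp
        thus "z1 $ i = z2 $ i" using i z1 z2 by simp
      qed
      with ne show False by simp
    qed
    moreover have "0 \<le> ?w \<bullet> ?w" by (rule dot_self_nonneg)
    ultimately show ?thesis by linarith
  qed
  have km1: "k > -1"
  proof (rule ccontr)
    assume "\<not> k > -1"
    let ?w = "1 \<cdot>\<^sub>v z1 + 1 \<cdot>\<^sub>v z2"
    have "?w \<bullet> ?w = 2 + 2 * k" unfolding lin_dot[OF z1(1) z2(1)] z1 z2 k_def by simp
    moreover have "0 \<le> ?w \<bullet> ?w" by (rule dot_self_nonneg)
    ultimately have "?w \<bullet> ?w = 0" using \<open>\<not> k > -1\<close> by linarith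
    hence "?w = 0\<^sub>v n" using dot_self_eq0[of ?w n] z1 z2 by simp
    hence "v \<bullet> ?w = 0" using vc by simp
    moreover have "v \<bullet> ?w = v \<bullet> z1 + v \<bullet> z2" using vc z1 z2 by (simp add: scalar_prod_add_distrib[of _ n])
    ultimately show False using p1 p2 by simp
  qed
  define L where "L = arccos k"
  have L: "0 < L" "L < pi" unfolding L_def using arccos_lt_bounded[OF km1 k1] by auto
  have cL: "cos L = k" unfolding L_def using k1 km1 by (simp add: cos_arccos)
  define sL where "sL = sin L"
  have sLp: "sL > 0" unfolding sL_def using L by (intro sin_gt_zero) auto
  have sL2: "sL^2 = 1 - k^2" unfolding sL_def using sin_cos_squared_add[of L] cL by simp
  define w where "w = 1 \<cdot>\<^sub>v z2 + (- k) \<cdot>\<^sub>v z1"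
  have wc: "w \<in> carrier_vec n" unfolding w_def using z1 z2 by simp
  have ww: "w \<bullet> w = 1 - k^2" unfolding w_def lin_dot[OF z2(1) z1(1)] z1 z2 z21 by (simp add: power2_eq_square)
  have z1w: "z1 \<bullet> w = 0" unfolding w_def using z1 z2 by (simp add: scalar_prod_add_distrib[of _ n] k_def)
  define u where "u = (1 / sL) \<cdot>\<^sub>v w"
  have uc: "u \<in> carrier_vec n" unfolding u_def using wc by simp
  have uu: "u \<bullet> u = 1"
  proof -
    have "u \<bullet> u = (1/sL)^2 * (w \<bullet> w)" unfolding u_def using wc by (simp add: power2_eq_square)
    also have "\<dots> = 1" unfolding ww sL2[symmetric] using sLp by (simp add: power_divide)
    finally show ?thesis .
  qed
  have z1u: "z1 \<bullet> u = 0" unfolding u_def using z1w wc z1 by simp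
  have orth: "orthonormal2 n z1 u" unfolding orthonormal2_def using z1 uc uu z1u by simp
  have c0: "crv z1 u 0 = z1" unfolding crv_def using z1 uc by (intro eq_vecI) auto
  have cL2: "crv z1 u L = z2"
  proof (rule eq_vecI)
    show "dim_vec (crv z1 u L) = dim_vec z2" using z1 uc z2 by simp
    fix i assume "i < dim_vec z2"
    hence i: "i < n" using z2 by simp
    have "crv z1 u L $ i = cos L * z1 $ i + sin L * u $ i" by (rule crv_index[OF z1(1) uc i])
    also have "\<dots> = k * z1 $ i + sL * ((1/sL) * (z2 $ i + (- k) * z1 $ i))"
      unfolding cL sL_def[symmetric] u_def w_def using i z1 z2 by simp
    also have "\<dots> = z2 $ i" using sLp by (simp add: algebra_simps)
    finally show "crv z1 u L $ i = z2 $ i" .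
  qed
  define g where "g t = obj A \<beta> (crv z1 u t)" for t
  have gd: "(g has_real_derivative D1 \<beta> z1 u t) (at t)" for t
    unfolding g_def by (rule G_deriv[OF z1(1) uc])
  have g1d: "((\<lambda>t. D1 \<beta> z1 u t) has_real_derivative D2 \<beta> z1 u t) (at t)" for t
    by (rule D1_deriv[OF z1(1) uc])
  have left: "D1 \<beta> z1 u 0 \<ge> 0"
  proof (rule left_end[OF gd], intro exI[of _ \<epsilon>1] conjI allI impI)
    show "\<epsilon>1 > 0" by fact
    fix h assume h: "0 < h \<and> h < \<epsilon>1"
    have "vdist (crv z1 u (0 + h)) z1 \<le> \<bar>(0 + h) - 0\<bar>" using crv_dist[OF orth, of "0+h" 0] c0 by simp
    hence "vdist (crv z1 u (0 + h)) z1 < \<epsilon>1" using h by simp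
    thus "g 0 \<le> g (0 + h)" unfolding g_def c0 using h1 crv_sphere[OF orth] by blast
  qed
  have right: "D1 \<beta> z1 u L \<le> 0"
  proof (rule right_end[OF gd], intro exI[of _ \<epsilon>2] conjI allI impI)
    show "\<epsilon>2 > 0" by fact
    fix h assume h: "0 < h \<and> h < \<epsilon>2"
    have "vdist (crv z1 u (L - h)) z2 \<le> \<bar>(L - h) - L\<bar>" using crv_dist[OF orth, of "L - h" L] cL2 by simp
    hence "vdist (crv z1 u (L - h)) z2 < \<epsilon>2" using h by simp
    thus "g L \<le> g (L - h)" unfolding g_def cL2 using h2 crv_sphere[OF orth] by blast
  qed
  from MVT2[of 0 L "\<lambda>t. D1 \<beta> z1 u t" "D2 \<beta> z1 u"] L g1d obtain \<xi> where xi: "0 < \<xi>" "\<xi> < L"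
    and mvt: "D1 \<beta> z1 u L - D1 \<beta> z1 u 0 = (L - 0) * D2 \<beta> z1 u \<xi>" by auto
  let ?P = "crv z1 u \<xi>" and ?P' = "dcrv z1 u \<xi>"
  have oP: "orthonormal2 n ?P ?P'" by (rule crv_orth(4)[OF orth])
  have Pc: "?P \<in> carrier_vec n" "?P \<bullet> ?P = 1" and P'c: "?P' \<in> carrier_vec n" "?P' \<bullet> ?P' = 1"
    using oP unfolding orthonormal2_def by auto
  note ob = orth_bounds[OF oP]
  define a1 where "a1 = v \<bullet> z1"
  define a2 where "a2 = v \<bullet> z2"
  define a0 where "a0 = min a1 a2"
  have a0: "a0 > 0" unfolding a0_def a1_def a2_def using p1 p2 by simp
  have capa0: "d^2 * (1 - a0^2) \<le> 2 * \<beta>^2" unfolding a0_def a1_def a2_def using cap1 cap2 by (cases "v \<bullet> z1 \<le> v \<bullet> z2") (auto simp: min_def)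
  have vP: "v \<bullet> ?P \<ge> a0"
  proof -
    have vu: "v \<bullet> u = (1/sL) * (a2 - k * a1)" unfolding u_def w_def a1_def a2_def using vc z1 z2 wc
      by (simp add: scalar_prod_add_distrib[of _ n] w_def[symmetric])
    have vPe: "v \<bullet> ?P = cos \<xi> * a1 + sin \<xi> * (v \<bullet> u)" unfolding crv_def a1_def using vc z1 uc
      by (simp add: scalar_prod_add_distrib[of _ n])
    have "sL * (v \<bullet> ?P) = a1 * (sL * cos \<xi> - k * sin \<xi>) + a2 * sin \<xi>"
      unfolding vPe vu using sLp by (simp add: algebra_simps)
    also have "sL * cos \<xi> - k * sin \<xi> = sin (L - \<xi>)" unfolding sL_def cL[symmetric] sin_diff by simp
    finally have e: "sL * (v \<bullet> ?P) = a1 * sin (L - \<xi>) + a2 * sin \<xi>" .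
    have s1: "sin (L - \<xi>) \<ge> 0" using xi L by (intro sin_ge_zero) auto
    have s2: "sin \<xi> \<ge> 0" using xi L by (intro sin_ge_zero) auto
    have "a0 * sin (L - \<xi>) \<le> a1 * sin (L - \<xi>)" using s1 unfolding a0_def by (intro mult_right_mono) auto
    moreover have "a0 * sin \<xi> \<le> a2 * sin \<xi>" using s2 unfolding a0_def by (intro mult_right_mono) auto
    moreover have "a0 * sL \<le> a0 * (sin (L - \<xi>) + sin \<xi>)"
      using a0 sin_sum_ge[OF L, of \<xi>] xi unfolding sL_def by (intro mult_left_mono) auto
    ultimately have "sL * a0 \<le> sL * (v \<bullet> ?P)" unfolding e by (simp add: algebra_simps)
    thus ?thesis using sLp by simp
  qed
  have bes: "(v \<bullet> ?P)^2 + (v \<bullet> ?P')^2 \<le> 1" using bessel[OF oP vc] vv by simp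
  have gP': "lam n + d * (1 - (v \<bullet> ?P')^2) \<le> Q ?P' ?P'" unfolding d_def by (rule G1[OF P'c])
  have gP: "Q ?P ?P \<le> lam n + r * (1 - (v \<bullet> ?P)^2)" unfolding r_def by (rule G2(1)[OF Pc])
  define e where "e = 1 - (v \<bullet> ?P)^2"
  have e0: "e \<ge> 0" unfolding e_def using G2(2)[OF Pc] by simp
  have ea: "e \<le> 1 - a0^2" unfolding e_def using vP a0 by (simp add: power_mono)
  have de: "d^2 * e \<le> 2 * \<beta>^2" using capa0 ea mult_left_mono[OF ea, of "d^2"] by simp
  have SS: "(\<Sum>k<n. 3 * (?P $ k)^2 * (?P' $ k)^2 - (?P $ k)^4) \<ge> -1"
  proof -
    have "(\<Sum>k<n. 3 * (?P $ k)^2 * (?P' $ k)^2 - (?P $ k)^4) = 3 * (\<Sum>k<n. (?P $ k)^2 * (?P' $ k)^2) - (\<Sum>k<n. (?P $ k)^4)"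
      by (simp add: sum_subtractf sum_distrib_left mult.assoc)
    thus ?thesis using ob(3,6) by linarith
  qed
  have D2lb: "D2 \<beta> z1 u \<xi> \<ge> d - (d + r) * e - 2 * \<beta>"
  proof -
    have "2 * \<beta> * (\<Sum>k<n. 3 * (?P $ k)^2 * (?P' $ k)^2 - (?P $ k)^4) \<ge> 2 * \<beta> * (-1)"
      using SS bpos by (intro mult_left_mono) auto
    moreover have "d * (1 - (v \<bullet> ?P')^2) \<ge> d * (1 - e)" unfolding e_def using bes d by (intro mult_left_mono) auto
    ultimately show ?thesis unfolding D2_def using gP' gP unfolding e_def[symmetric]
      by (simp add: algebra_simps)
  qed
  have "d^2 * (d - (d + r) * e - 2 * \<beta>) > 0"
  proof -
    have "(d + r) * (d^2 * e) \<le> (d + r) * (2 * \<beta>^2)" using de d r by (intro mult_left_mono) auto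
    moreover have "2 * \<beta>^2 * (d + r) + 2 * \<beta> * d^2 < d^3" using b2 unfolding d_def r_def by simp
    moreover have "d^2 * (d - (d + r) * e - 2 * \<beta>) = d^3 - (d + r) * (d^2 * e) - 2 * \<beta> * d^2"
      by (simp add: algebra_simps power2_eq_square power3_eq_cube)
    ultimately show ?thesis by (simp add: algebra_simps)
  qed
  hence "d - (d + r) * e - 2 * \<beta> > 0" using d by (simp add: zero_less_mult_iff)
  hence "D2 \<beta> z1 u \<xi> > 0" using D2lb by linarith
  hence "D1 \<beta> z1 u L - D1 \<beta> z1 u 0 > 0" using mvt L by simp
  thus False using left right by linarith
qed

end


context main
begin

definition ng :: "real vec \<Rightarrow> real vec" where "ng z = (-1) \<cdot>\<^sub>v z"

lemma ng_carrier: "z \<in> carrier_vec n \<Longrightarrow> ng z \<in> carrier_vec n" unfolding ng_def by simp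

lemma ng_ng: "ng (ng z) = z" unfolding ng_def by (intro eq_vecI) auto

lemma ng_sphere: "z \<in> unit_sphere n \<Longrightarrow> ng z \<in> unit_sphere n"
  unfolding unit_sphere_def ng_def by auto

lemma ng_obj: assumes z: "z \<in> carrier_vec n" shows "obj A \<beta> (ng z) = obj A \<beta> z"
proof -
  have "ng z \<bullet> (A *\<^sub>v ng z) = z \<bullet> (A *\<^sub>v z)" unfolding ng_def using A z by (simp add: mult_mat_vec)
  moreover have "(\<Sum>k<dim_vec (ng z). (ng z $ k)^4) = (\<Sum>k<dim_vec z. (z $ k)^4)"
    unfolding ng_def by (intro sum.cong) auto
  ultimately show ?thesis unfolding obj_def by simp
qed

lemma ng_vdist: assumes w: "w \<in> carrier_vec n" and z: "z \<in> carrier_vec n"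
  shows "vdist (ng w) (ng z) = vdist w z"
proof -
  have "(ng w - ng z) \<bullet> (ng w - ng z) = (\<Sum>i<n. (ng w - ng z) $ i * (ng w - ng z) $ i)"
    using w z ng_carrier by (intro dot_sum) auto
  also have "\<dots> = (\<Sum>i<n. (w - z) $ i * (w - z) $ i)"
    using w z by (intro sum.cong) (auto simp: ng_def algebra_simps)
  also have "\<dots> = (w - z) \<bullet> (w - z)" using w z by (intro dot_sum[symmetric]) auto
  finally show ?thesis unfolding vdist_def by simp
qed

lemma ng_v: "z \<in> carrier_vec n \<Longrightarrow> v \<bullet> ng z = - (v \<bullet> z)"
  unfolding ng_def using vc by simp

lemma ng_local: assumes lm: "local_minimizer_on (obj A \<beta>) (unit_sphere n) z"
  shows "local_minimizer_on (obj A \<beta>) (unit_sphere n) (ng z)"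
proof -
  from lm have zs: "z \<in> unit_sphere n" and "\<exists>\<epsilon>>0. \<forall>w\<in>unit_sphere n. vdist w z < \<epsilon> \<longrightarrow> obj A \<beta> z \<le> obj A \<beta> w"
    unfolding local_minimizer_on_def by auto
  then obtain \<epsilon> where \<epsilon>: "\<epsilon> > 0" and h: "\<forall>w\<in>unit_sphere n. vdist w z < \<epsilon> \<longrightarrow> obj A \<beta> z \<le> obj A \<beta> w" by blast
  have zc: "z \<in> carrier_vec n" using zs unfolding unit_sphere_def by auto
  show ?thesis unfolding local_minimizer_on_def
  proof (intro conjI exI[of _ \<epsilon>] ballI impI)
    show "ng z \<in> unit_sphere n" by (rule ng_sphere[OF zs])
    show "\<epsilon> > 0" by fact
    fix w assume w: "w \<in> unit_sphere n" "vdist w (ng z) < \<epsilon>"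
    have wc: "w \<in> carrier_vec n" using w unfolding unit_sphere_def by auto
    have "vdist (ng w) z < \<epsilon>" using ng_vdist[OF wc ng_carrier[OF zc]] w ng_ng by simp
    hence "obj A \<beta> z \<le> obj A \<beta> (ng w)" using h ng_sphere[OF w(1)] by blast
    thus "obj A \<beta> (ng z) \<le> obj A \<beta> w" using ng_obj[OF zc] ng_obj[OF wc] by simp
  qed
qed

lemma global_local: "global_minimizer_on f S z \<Longrightarrow> local_minimizer_on f S z"
  unfolding global_minimizer_on_def local_minimizer_on_def by (auto intro: exI[of _ 1])

lemma ng_global: assumes g: "global_minimizer_on (obj A \<beta>) (unit_sphere n) z"
  shows "global_minimizer_on (obj A \<beta>) (unit_sphere n) (ng z)"
proof -
  have zs: "z \<in> unit_sphere n" using g unfolding global_minimizer_on_def by auto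
  have zc: "z \<in> carrier_vec n" using zs unfolding unit_sphere_def by auto
  show ?thesis using g ng_sphere[OF zs] ng_obj[OF zc] unfolding global_minimizer_on_def by simp
qed

lemma v_nonzero: assumes lm: "local_minimizer_on (obj A \<beta>) (unit_sphere n) z"
  shows "v \<bullet> z \<noteq> 0"
proof
  assume h: "v \<bullet> z = 0"
  define d where "d = lam (n-1) - lam n"
  have d: "d > 0" unfolding d_def using d_pos .
  have "d^2 \<le> 2 * \<beta>^2" using cap[OF lm] h unfolding d_def by simp
  moreover have "\<beta>^2 \<le> (3 * d / 16)^2" using b1 bpos unfolding d_def by (intro power_mono) auto
  hence "\<beta>^2 \<le> 9 * d^2 / 256" by (simp add: power_divide power_mult_distrib)
  moreover have "d^2 > 0" using d by simp
  ultimately show False by linarith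
qed

theorem main_thm:
  "card {z. local_minimizer_on (obj A \<beta>) (unit_sphere n) z} = 2
     \<and> (\<forall>z. local_minimizer_on (obj A \<beta>) (unit_sphere n) z
          \<longrightarrow> global_minimizer_on (obj A \<beta>) (unit_sphere n) z)"
proof -
  have cl: "closed {x::nat\<Rightarrow>real. True}" by simp
  from exists_min_sphere[of "obj A \<beta>" n "\<lambda>_. True", OF cont_obj[OF A] _] sphere_ne
  obtain zs where zs: "zs \<in> unit_sphere n" and zmin: "\<forall>w\<in>unit_sphere n. obj A \<beta> zs \<le> obj A \<beta> w" by auto
  have gzs: "global_minimizer_on (obj A \<beta>) (unit_sphere n) zs" unfolding global_minimizer_on_def using zs zmin by simp
  have zsc: "zs \<in> carrier_vec n" using zs unfolding unit_sphere_def by auto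
  define ws where "ws = (if v \<bullet> zs > 0 then zs else ng zs)"
  have gws: "global_minimizer_on (obj A \<beta>) (unit_sphere n) ws" unfolding ws_def using gzs ng_global[OF gzs] by simp
  have lws: "local_minimizer_on (obj A \<beta>) (unit_sphere n) ws" by (rule global_local[OF gws])
  have wsc: "ws \<in> carrier_vec n" unfolding ws_def using zsc ng_carrier by simp
  have vws: "v \<bullet> ws > 0"
  proof -
    have "v \<bullet> zs \<noteq> 0" by (rule v_nonzero[OF global_local[OF gzs]])
    thus ?thesis unfolding ws_def using ng_v[OF zsc] by auto
  qed
  have gnws: "global_minimizer_on (obj A \<beta>) (unit_sphere n) (ng ws)" by (rule ng_global[OF gws])
  have set_eq: "{z. local_minimizer_on (obj A \<beta>) (unit_sphere n) z} = {ws, ng ws}"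
  proof (intro equalityI subsetI)
    fix z assume "z \<in> {z. local_minimizer_on (obj A \<beta>) (unit_sphere n) z}"
    hence lz: "local_minimizer_on (obj A \<beta>) (unit_sphere n) z" by simp
    have zc: "z \<in> carrier_vec n" using lz unfolding local_minimizer_on_def unit_sphere_def by auto
    have "v \<bullet> z \<noteq> 0" by (rule v_nonzero[OF lz])
    hence "v \<bullet> z > 0 \<or> v \<bullet> ng z > 0" using ng_v[OF zc] by auto
    thus "z \<in> {ws, ng ws}"
    proof
      assume "v \<bullet> z > 0"
      hence "z = ws" using unique[OF lz lws _ vws] by simp
      thus ?thesis by simp
    next
      assume "v \<bullet> ng z > 0"
      hence "ng z = ws" using unique[OF ng_local[OF lz] lws _ vws] by simp
      hence "z = ng ws" using ng_ng by metis
      thus ?thesis by simp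
    qed
  next
    fix z assume "z \<in> {ws, ng ws}"
    thus "z \<in> {z. local_minimizer_on (obj A \<beta>) (unit_sphere n) z}"
      using lws global_local[OF gnws] by auto
  qed
  have neq: "ws \<noteq> ng ws" using vws ng_v[OF wsc] by auto
  show ?thesis
  proof
    show "card {z. local_minimizer_on (obj A \<beta>) (unit_sphere n) z} = 2" unfolding set_eq using neq by simp
    show "\<forall>z. local_minimizer_on (obj A \<beta>) (unit_sphere n) z \<longrightarrow> global_minimizer_on (obj A \<beta>) (unit_sphere n) z"
    proof (intro allI impI)
      fix z assume "local_minimizer_on (obj A \<beta>) (unit_sphere n) z"
      hence "z \<in> {ws, ng ws}" using set_eq by blast
      thus "global_minimizer_on (obj A \<beta>) (unit_sphere n) z" using gws gnws by auto
    qed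
  qed
qed

end

lemma beta_arith: fixes \<beta> \<delta> \<rho> \<gamma> :: real
  assumes d: "\<delta> > 0" and g: "\<gamma> > 0" and b: "\<beta> > 0" and rd: "\<rho> \<ge> \<delta>"
    and bl: "\<beta> \<le> \<delta> / (2 * (7/3 + \<gamma>) + (2/3 + \<gamma>) * (\<rho> / \<delta>))"
  shows "16 * \<beta> \<le> 3 * \<delta>" "2 * \<beta>^2 * (\<delta> + \<rho>) + 2 * \<beta> * \<delta>^2 < \<delta>^3"
proof -
  define D where "D = 2 * (7/3 + \<gamma>) + (2/3 + \<gamma>) * (\<rho> / \<delta>)"
  have rpos: "\<rho> / \<delta> \<ge> 0" using d rd by simp
  have "(2/3 + \<gamma>) * (\<rho> / \<delta>) \<ge> 0" using g rpos by (intro mult_nonneg_nonneg) auto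
  moreover have "2 * (7/3 + \<gamma>) > 0" using g by simp
  ultimately have Dp: "D > 0" unfolding D_def by linarith
  have "\<beta> * D \<le> \<delta>" using bl Dp unfolding D_def[symmetric] by (simp add: pos_le_divide_eq)
  hence "\<beta> * D * \<delta> \<le> \<delta> * \<delta>" using d by (intro mult_right_mono) auto
  moreover have "D * \<delta> = (14/3) * \<delta> + (2/3) * \<rho> + \<gamma> * (2 * \<delta> + \<rho>)"
    unfolding D_def using d by (simp add: field_simps)
  ultimately have "\<beta> * ((14/3) * \<delta> + (2/3) * \<rho> + \<gamma> * (2 * \<delta> + \<rho>)) \<le> \<delta> * \<delta>"
    by (metis mult.assoc)
  moreover have "\<beta> * ((14/3) * \<delta> + (2/3) * \<rho> + \<gamma> * (2 * \<delta> + \<rho>)) = \<beta> * ((14/3) * \<delta> + (2/3) * \<rho>) + \<beta> * (\<gamma> * (2 * \<delta> + \<rho>))"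
    by (simp add: algebra_simps)
  ultimately have "\<beta> * ((14/3) * \<delta> + (2/3) * \<rho>) + \<beta> * (\<gamma> * (2 * \<delta> + \<rho>)) \<le> \<delta> * \<delta>"
    by linarith
  moreover have "\<beta> * (\<gamma> * (2 * \<delta> + \<rho>)) \<ge> 0" using b g d rd by simp
  ultimately have key: "\<beta> * (14 * \<delta> + 2 * \<rho>) \<le> 3 * (\<delta> * \<delta>)" by (simp add: algebra_simps)
  have "\<beta> * (16 * \<delta>) \<le> \<beta> * (14 * \<delta> + 2 * \<rho>)" using b rd by (intro mult_left_mono) auto
  hence "(16 * \<beta>) * \<delta> \<le> (3 * \<delta>) * \<delta>" using key by (simp add: algebra_simps)
  thus "16 * \<beta> \<le> 3 * \<delta>" using d by simp
  have k2: "2 * (\<beta> * \<rho>) \<le> 3 * (\<delta> * \<delta>) - 14 * (\<beta> * \<delta>)" using key by (simp add: algebra_simps)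
  have "2 * \<beta>^2 * (\<delta> + \<rho>) = 2 * \<beta>^2 * \<delta> + \<beta> * (2 * (\<beta> * \<rho>))" by (simp add: algebra_simps power2_eq_square)
  also have "\<dots> \<le> 2 * \<beta>^2 * \<delta> + \<beta> * (3 * (\<delta> * \<delta>) - 14 * (\<beta> * \<delta>))" using k2 b by (intro add_left_mono mult_left_mono) auto
  finally have "2 * \<beta>^2 * (\<delta> + \<rho>) + 2 * \<beta> * \<delta>^2 \<le> \<delta>^3 - \<delta> * ((\<delta> - 5/2 * \<beta>)^2 + 23/4 * \<beta>^2)"
    by (simp add: algebra_simps power2_eq_square power3_eq_cube)
  moreover have "\<delta> * ((\<delta> - 5/2 * \<beta>)^2 + 23/4 * \<beta>^2) > 0" using d b by (intro mult_pos_pos add_nonneg_pos) auto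
  ultimately show "2 * \<beta>^2 * (\<delta> + \<rho>) + 2 * \<beta> * \<delta>^2 < \<delta>^3" by linarith
qed

theorem corollary2:
  fixes n :: nat and A :: "real mat" and lam :: "nat \<Rightarrow> real"
    and \<rho> \<delta> \<gamma> \<beta> :: real
  assumes n2: "n \<ge> 2"
    and A_carrier: "A \<in> carrier_mat n n"
    and A_sym: "A\<^sup>T = A"
    and eigs: "char_poly A = (\<Prod>i=1..n. [:- lam i, 1:])"
    and sorted: "\<And>i j. 1 \<le> i \<Longrightarrow> i \<le> j \<Longrightarrow> j \<le> n \<Longrightarrow> lam j \<le> lam i"
    and rho_def: "\<rho> = lam 1 - lam n"
    and delta_def: "\<delta> = lam (n - 1) - lam n"
    and delta_pos: "\<delta> > 0"
    and gamma_pos: "\<gamma> > 0"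
    and beta_pos: "\<beta> > 0"
    and beta_le: "\<beta> \<le> \<delta> / (2 * (7/3 + \<gamma>) + (2/3 + \<gamma>) * (\<rho> / \<delta>))"
  shows "card {z. local_minimizer_on (obj A \<beta>) (unit_sphere n) z} = 2
       \<and> (\<forall>z. local_minimizer_on (obj A \<beta>) (unit_sphere n) z
              \<longrightarrow> global_minimizer_on (obj A \<beta>) (unit_sphere n) z)"
proof -
  interpret symmat n A by unfold_locales (rule A_carrier, rule A_sym)
  have gap: "lam n < lam (n - 1)" using delta_pos delta_def by simp
  interpret spec n A lam by unfold_locales (use n2 eigs sorted gap in auto)
  obtain v where v: "v \<in> carrier_vec n" "v \<bullet> v = 1" "A *\<^sub>v v = lam n \<cdot>\<^sub>v v"
    and sec: "\<forall>y\<in>carrier_vec n. v \<bullet> y = 0 \<longrightarrow> lam (n - 1) * (y \<bullet> y) \<le> Q y y"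
    and up: "\<forall>y\<in>carrier_vec n. Q y y \<le> lam 1 * (y \<bullet> y)" using spectral by blast
  have rd: "\<rho> \<ge> \<delta>" using sorted[of 1 "n-1"] n2 rho_def delta_def by auto
  note ba = beta_arith[OF delta_pos gamma_pos beta_pos rd beta_le]
  interpret main n A lam \<beta> v
    by unfold_locales (use v sec up beta_pos ba in \<open>auto simp: delta_def rho_def\<close>)
  show ?thesis by (rule main_thm)
qed

end
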